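(* Let $\alpha\in(0,1)$ and suppose there exist $b_\alpha>0$ and $M_\alpha\ge\max_{F,G\in\mathcal D^\Delta}\|F-G\|$ such that for all $F\in\mathcal D^\Delta$, $|F(\mathrm{VaR}_\alpha(F)+b_\alpha y)-\alpha|\ge|y|$ for all $y\in[-M_\alpha,M_\alpha]$. Then, with respect to the norm $\|F\|=\max\{\|F\|_\infty,|\int_{-\infty}^0x\,dF(x)|,|\int_0^\infty x\,dF(x)|\}$, for every $M_0$ with $0<M_0<M_\alpha$, $\mathrm{CVaR}_\alpha$ is a smooth EDPM with constants $d_1=\frac{1+v^*}{\alpha}$, $d_2=\frac{2b_\alpha}{\alpha}$ and $M_0$, where $v^*=\max_{F\in\mathcal D^\Delta}|\mathrm{VaR}_\alpha(F)|$.
   Context: Let $K\ge1$, $\mathbb K=\{1,\dots,K\}$, and $F^{(1)},\dots,F^{(K)}$ distribution functions on $\mathbb R$. $\Delta_{K-1}$ is the probability simplex in $\mathbb R^K$, $\mathcal D^\Delta=\{\sum_ip_iF^{(i)}:p\in\Delta_{K-1}\}$; $\hat{\mathcal D}$ is the set of empirical distribution functions $y\mapsto\frac1t\sum_{s\le t}\mathbf 1\{x_s\le y\}$ of all finite real sequences. $\|F\|_\infty=\sup_x|F(x)|$; $L$ is the space of bounded functions on $\mathbb R$ for which the norm above is finite (Lebesgue–Stieltjes integrals), and $L(L,\mathbb R)$ the bounded linear functionals on $L$. $\mathrm{VaR}_\alpha(F)=\inf\{y:F(y)\ge\alpha\}$ and $\mathrm{CVaR}_\alpha(F)=\mathrm{VaR}_\alpha(F)-\frac1\alpha\int_{-\infty}^{\mathrm{VaR}_\alpha(F)}F(y)\,dy$.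 A map $\mathcal U:L\to\mathbb R$ is a smooth EDPM with constants $d_1,d_2\ge0$, $M_0>0$ if there is a map $A:L\to L(L,\mathbb R)$, $F\mapsto A_F$, such that for every $F\in\mathcal D^\Delta$: $|A_F(G-F)|\le d_1\|G-F\|$ for all $G\in\mathcal D^\Delta\cup\hat{\mathcal D}$, and $|\mathcal U(G)-\mathcal U(F)-A_F(G-F)|\le\frac12d_2\|G-F\|^2$ for all $G\in\mathcal D^\Delta\cup\{f\in\hat{\mathcal D}:\|F-f\|\le M_0\}$. *)

theory Defs
  imports "HOL-Analysis.Analysis"
begin

definition is_dist_fn :: "(real \<Rightarrow> real) \<Rightarrow> bool" where
  "is_dist_fn F \<longleftrightarrow> mono F \<and> (\<forall>x. continuous (at_right x) F)
     \<and> (F \<longlongrightarrow> 0) at_bot \<and> (F \<longlongrightarrow> 1) at_top"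

definition prob_simplex :: "nat \<Rightarrow> (nat \<Rightarrow> real) set" where
  "prob_simplex K = {p. (\<forall>i\<in>{1..K}. 0 \<le> p i) \<and> (\<Sum>i=1..K. p i) = 1}"

definition mixtures :: "nat \<Rightarrow> (nat \<Rightarrow> real \<Rightarrow> real) \<Rightarrow> (real \<Rightarrow> real) set" where
  "mixtures K Fs = {(\<lambda>y. \<Sum>i=1..K. p i * Fs i y) | p. p \<in> prob_simplex K}"

definition empirical :: "(real \<Rightarrow> real) set" where
  "empirical = {(\<lambda>y. (\<Sum>s=1..t. if x s \<le> y then 1 else 0) / real t)
                 | (t::nat) (x::nat \<Rightarrow> real). 1 \<le> t}"

text \<open>Lebesgue--Stieltjes calculus: H is written as a difference of two bounded,
  nondecreasing, right-continuous functions whose Lebesgue--Stieltjes measures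
  integrate the identity (so that the first-moment integrals exist).\<close>
definition ls_decomp :: "(real \<Rightarrow> real) \<Rightarrow> (real \<Rightarrow> real) \<Rightarrow> (real \<Rightarrow> real) \<Rightarrow> bool" where
  "ls_decomp H F1 F2 \<longleftrightarrow>
     mono F1 \<and> mono F2 \<and> bounded (range F1) \<and> bounded (range F2)
     \<and> (\<forall>x. continuous (at_right x) F1) \<and> (\<forall>x. continuous (at_right x) F2)
     \<and> (\<forall>x. H x = F1 x - F2 x)
     \<and> integrable (interval_measure F1) (\<lambda>x. x)
     \<and> integrable (interval_measure F2) (\<lambda>x. x)"

definition L_space :: "(real \<Rightarrow> real) set" where
  "L_space = {H. \<exists>F1 F2. ls_decomp H F1 F2}"

definition ls_moment :: "(real \<Rightarrow> real) \<Rightarrow> real set \<Rightarrow> real" where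
  "ls_moment H S = (SOME r. \<exists>F1 F2. ls_decomp H F1 F2 \<and>
      r = (LINT x:S|interval_measure F1. x) - (LINT x:S|interval_measure F2. x))"

definition sup_norm :: "(real \<Rightarrow> real) \<Rightarrow> real" where
  "sup_norm H = (SUP x. \<bar>H x\<bar>)"

definition normL :: "(real \<Rightarrow> real) \<Rightarrow> real" where
  "normL H = max (sup_norm H) (max \<bar>ls_moment H {..0}\<bar> \<bar>ls_moment H {0<..}\<bar>)"

definition bounded_linear_L :: "((real \<Rightarrow> real) \<Rightarrow> real) \<Rightarrow> bool" where
  "bounded_linear_L \<phi> \<longleftrightarrow>
     (\<forall>H1\<in>L_space. \<forall>H2\<in>L_space. \<forall>a b::real.
        \<phi> (\<lambda>x. a * H1 x + b * H2 x) = a * \<phi> H1 + b * \<phi> H2)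
     \<and> (\<exists>C. \<forall>H\<in>L_space. \<bar>\<phi> H\<bar> \<le> C * normL H)"

definition VaR :: "real \<Rightarrow> (real \<Rightarrow> real) \<Rightarrow> real" where
  "VaR \<alpha> F = Inf {y. F y \<ge> \<alpha>}"

definition CVaR :: "real \<Rightarrow> (real \<Rightarrow> real) \<Rightarrow> real" where
  "CVaR \<alpha> F = VaR \<alpha> F - (1 / \<alpha>) * (LINT y:{..VaR \<alpha> F}|lborel. F y)"

definition smooth_EDPM ::
  "nat \<Rightarrow> (nat \<Rightarrow> real \<Rightarrow> real) \<Rightarrow> ((real \<Rightarrow> real) \<Rightarrow> real) \<Rightarrow> real \<Rightarrow> real \<Rightarrow> real \<Rightarrow> bool" where
  "smooth_EDPM K Fs U d1 d2 M0 \<longleftrightarrow> 0 \<le> d1 \<and> 0 \<le> d2 \<and> 0 < M0 \<and>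
    (\<exists>A :: (real \<Rightarrow> real) \<Rightarrow> (real \<Rightarrow> real) \<Rightarrow> real.
       (\<forall>F\<in>L_space. bounded_linear_L (A F)) \<and>
       (\<forall>F\<in>mixtures K Fs.
          (\<forall>G\<in>mixtures K Fs \<union> empirical.
              \<bar>A F (\<lambda>x. G x - F x)\<bar> \<le> d1 * normL (\<lambda>x. G x - F x)) \<and>
          (\<forall>G\<in>mixtures K Fs \<union> {f\<in>empirical. normL (\<lambda>x. F x - f x) \<le> M0}.
              \<bar>U G - U F - A F (\<lambda>x. G x - F x)\<bar> \<le> 1/2 * d2 * (normL (\<lambda>x. G x - F x))\<^sup>2)))"

end

theory Submission
  imports Defs "HOL-Probability.Distribution_Functions"
begin

lemma lim_bot_mono:
  fixes f :: "real \<Rightarrow> real"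
  assumes "mono f" "bdd_below (range f)"
  shows "(f \<longlongrightarrow> Inf (range f)) at_bot"
proof (rule order_tendstoI)
  fix a assume "a < Inf (range f)"
  then show "eventually (\<lambda>x. a < f x) at_bot"
  proof -
    have "\<forall>x. a < f x"
    proof
      fix x
      have "Inf (range f) \<le> f x" by (rule cInf_lower[OF rangeI assms(2)])
      with \<open>a < Inf (range f)\<close> show "a < f x" by linarith
    qed
    then show ?thesis by (rule always_eventually)
  qed
next
  fix a assume "Inf (range f) < a"
  then obtain y where "f y < a" using cInf_lessD[of "range f" a] by auto
  then show "eventually (\<lambda>x. f x < a) at_bot"
    unfolding eventually_at_bot_linorder
  proof (intro exI[of _ y] allI impI)
    fix x assume "x \<le> y"
    have "f x \<le> f y" using assms(1) \<open>x \<le> y\<close> by (rule monoD)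
    with \<open>f y < a\<close> show "f x < a" by linarith
  qed
qed

lemma lim_top_mono:
  fixes f :: "real \<Rightarrow> real"
  assumes "mono f" "bdd_above (range f)"
  shows "(f \<longlongrightarrow> Sup (range f)) at_top"
proof (rule order_tendstoI)
  fix a assume "Sup (range f) < a"
  then show "eventually (\<lambda>x. f x < a) at_top"
  proof -
    have "\<forall>x. f x < a"
    proof
      fix x
      have "f x \<le> Sup (range f)" by (rule cSup_upper[OF rangeI assms(2)])
      with \<open>Sup (range f) < a\<close> show "f x < a" by linarith
    qed
    then show ?thesis by (rule always_eventually)
  qed
next
  fix a assume "a < Sup (range f)"
  then obtain y where "a < f y" using less_cSupD[of "range f" a] by auto
  then show "eventually (\<lambda>x. a < f x) at_top"
    unfolding eventually_at_top_linorder
  proof (intro exI[of _ y] allI impI)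
    fix x assume "y \<le> x"
    have "f y \<le> f x" using assms(1) \<open>y \<le> x\<close> by (rule monoD)
    with \<open>a < f y\<close> show "a < f x" by linarith
  qed
qed

lemma interval_measure_shift: "interval_measure (\<lambda>x. F x - c) = interval_measure F"
  unfolding interval_measure_def by simp

lemma meas_tri:
  "(\<lambda>(t,s). indicator {s..0} t :: ennreal) \<in> borel_measurable (lborel \<Otimes>\<^sub>M interval_measure F)"
proof -
  have "(\<lambda>(t,s). indicator {s..0} t :: ennreal) = (\<lambda>p. indicator {p::real\<times>real. snd p \<le> fst p \<and> fst p \<le> 0} p)"
    by (auto simp: fun_eq_iff split: split_indicator)
  moreover have "{p::real\<times>real. snd p \<le> fst p \<and> fst p \<le> 0} \<in> sets (lborel \<Otimes>\<^sub>M interval_measure F)"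
    by (subst sets_pair_measure_cong[OF sets_lborel sets_interval_measure]) (unfold borel_prod, intro borel_closed closed_Collect_conj closed_Collect_le continuous_on_fst[OF continuous_on_id] continuous_on_snd[OF continuous_on_id] continuous_on_const)
  ultimately show ?thesis by simp
qed

lemma meas_tri2:
  "(\<lambda>(t,s). indicator {0<..<s} t :: ennreal) \<in> borel_measurable (lborel \<Otimes>\<^sub>M interval_measure F)"
proof -
  have "(\<lambda>(t,s). indicator {0<..<s} t :: ennreal) = (\<lambda>p. indicator {p::real\<times>real. 0 < fst p \<and> fst p < snd p} p)"
    by (auto simp: fun_eq_iff split: split_indicator)
  moreover have "{p::real\<times>real. 0 < fst p \<and> fst p < snd p} \<in> sets (lborel \<Otimes>\<^sub>M interval_measure F)"
    by (subst sets_pair_measure_cong[OF sets_lborel sets_interval_measure])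
       (unfold borel_prod, intro borel_open open_Collect_conj open_Collect_less continuous_on_fst[OF continuous_on_id] continuous_on_snd[OF continuous_on_id] continuous_on_const)
  ultimately show ?thesis by simp
qed

lemma core_left:
  fixes F :: "real \<Rightarrow> real"
  assumes mono: "mono F" and rc: "\<And>x. continuous (at_right x) F" and lim: "(F \<longlongrightarrow> Lb) at_bot"
  shows "(\<integral>\<^sup>+ t. ennreal (indicator {..0} t * (F t - Lb)) \<partial>lborel)
       = (\<integral>\<^sup>+ s. ennreal (indicator {..0} s * (- s)) \<partial>interval_measure F)"
proof -
  let ?F0 = "\<lambda>x. F x - Lb"
  let ?mu = "interval_measure F"
  have m0: "\<And>x y. x \<le> y \<Longrightarrow> ?F0 x \<le> ?F0 y" using mono by (auto dest: monoD)
  have rc0: "\<And>x. continuous (at_right x) ?F0" by (rule continuous_diff[OF rc continuous_const])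
  have l0: "(?F0 \<longlongrightarrow> 0) at_bot" using tendsto_diff[OF lim tendsto_const[of Lb]] by simp
  have Iic: "emeasure ?mu {..x} = ennreal (?F0 x)" for x
    using emeasure_interval_measure_Iic[OF m0 rc0 l0, of x] interval_measure_shift[of F Lb] by simp
  have sf: "sigma_finite_measure ?mu"
    using sigma_finite_interval_measure[of F] mono rc by (auto dest: monoD)
  interpret pair_sigma_finite lborel ?mu
    by (intro pair_sigma_finite.intro sf) (simp add: lborel.sigma_finite_measure_axioms)
  have "(\<integral>\<^sup>+ s. (\<integral>\<^sup>+ t. indicator {s..0} t \<partial>lborel) \<partial>?mu)
       = (\<integral>\<^sup>+ t. (\<integral>\<^sup>+ s. indicator {s..0} t \<partial>?mu) \<partial>lborel)"
    using Fubini'[OF meas_tri[of F]] by simp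
  also have "\<dots> = (\<integral>\<^sup>+ t. ennreal (indicator {..0} t * (F t - Lb)) \<partial>lborel)"
  proof (rule nn_integral_cong)
    fix t :: real
    have "(\<lambda>s. indicator {s..0} t :: ennreal) = (\<lambda>s. indicator {..0} t * indicator {..t} s)"
      by (auto simp: fun_eq_iff split: split_indicator)
    then have "(\<integral>\<^sup>+ s. indicator {s..0} t \<partial>?mu) = indicator {..0} t * emeasure ?mu {..t}"
      by (simp add: nn_integral_cmult)
    also have "\<dots> = ennreal (indicator {..0} t * (F t - Lb))"
      by (simp add: Iic split: split_indicator)
    finally show "(\<integral>\<^sup>+ s. indicator {s..0} t \<partial>?mu) = ennreal (indicator {..0} t * (F t - Lb))" .
  qed
  finally have 1: "(\<integral>\<^sup>+ s. (\<integral>\<^sup>+ t. indicator {s..0} t \<partial>lborel) \<partial>?mu)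
       = (\<integral>\<^sup>+ t. ennreal (indicator {..0} t * (F t - Lb)) \<partial>lborel)" .
  have "(\<integral>\<^sup>+ s. (\<integral>\<^sup>+ t. indicator {s..0} t \<partial>lborel) \<partial>?mu)
      = (\<integral>\<^sup>+ s. ennreal (indicator {..0} s * (- s)) \<partial>?mu)"
  proof (rule nn_integral_cong)
    fix s :: real
    show "(\<integral>\<^sup>+ t. indicator {s..0} t \<partial>lborel) = ennreal (indicator {..0} s * (- s))"
      by (subst nn_integral_indicator) (auto simp: indicator_def)
  qed
  with 1 show ?thesis by simp
qed

lemma core_right:
  fixes F :: "real \<Rightarrow> real"
  assumes mono: "mono F" and rc: "\<And>x. continuous (at_right x) F" and lim: "(F \<longlongrightarrow> Lb) at_bot"
    and limt: "(F \<longlongrightarrow> Lt) at_top"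
  shows "(\<integral>\<^sup>+ t. ennreal (indicator {0<..} t * (Lt - F t)) \<partial>lborel)
       = (\<integral>\<^sup>+ s. ennreal (indicator {0<..} s * s) \<partial>interval_measure F)"
proof -
  let ?F0 = "\<lambda>x. F x - Lb"
  let ?mu = "interval_measure F"
  have m0: "\<And>x y. x \<le> y \<Longrightarrow> ?F0 x \<le> ?F0 y" using mono by (auto dest: monoD)
  have rc0: "\<And>x. continuous (at_right x) ?F0" by (rule continuous_diff[OF rc continuous_const])
  have l0: "(?F0 \<longlongrightarrow> 0) at_bot" using tendsto_diff[OF lim tendsto_const[of Lb]] by simp
  have lt0: "(?F0 \<longlongrightarrow> Lt - Lb) at_top" using tendsto_diff[OF limt tendsto_const[of Lb]] by simp
  have Flt: "F x \<le> Lt" for x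
  proof (rule tendsto_lowerbound[OF limt])
    show "eventually (\<lambda>y. F x \<le> F y) at_top"
      unfolding eventually_at_top_linorder by (rule exI[of _ x]) (auto intro: monoD[OF mono])
  qed simp
  have Flb: "Lb \<le> F x" for x
  proof (rule tendsto_upperbound[OF lim])
    show "eventually (\<lambda>y. F y \<le> F x) at_bot"
      unfolding eventually_at_bot_linorder by (rule exI[of _ x]) (auto intro: monoD[OF mono])
  qed simp
  have Iic: "emeasure ?mu {..x} = ennreal (?F0 x)" for x
    using emeasure_interval_measure_Iic[OF m0 rc0 l0, of x] interval_measure_shift[of F Lb] by simp
  have UN: "emeasure ?mu UNIV = ennreal (Lt - Lb)"
  proof -
    have "0 \<le> Lt - Lb" using Flt[of 0] Flb[of 0] by linarith
    from interval_measure_UNIV[OF m0 rc0 l0 lt0 this] show ?thesis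
      by (simp only: interval_measure_shift)
  qed
  have Ioi: "emeasure ?mu {x<..} = ennreal (Lt - F x)" for x
  proof -
    have "emeasure ?mu {x<..} = emeasure ?mu (UNIV - {..x})"
      by (intro arg_cong[where f="emeasure ?mu"]) auto
    also have "\<dots> = emeasure ?mu UNIV - emeasure ?mu {..x}"
      by (rule emeasure_Diff) (auto simp: UN Iic)
    also have "\<dots> = ennreal (Lt - Lb) - ennreal (F x - Lb)"
      by (simp only: UN Iic)
    also have "\<dots> = ennreal (Lt - F x)"
      using Flb[of x] by (subst ennreal_minus) auto
    finally show ?thesis .
  qed
  have sf: "sigma_finite_measure ?mu"
    using sigma_finite_interval_measure[of F] mono rc by (auto dest: monoD)
  interpret pair_sigma_finite lborel ?mu
    by (intro pair_sigma_finite.intro sf) (simp add: lborel.sigma_finite_measure_axioms)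
  have "(\<integral>\<^sup>+ s. (\<integral>\<^sup>+ t. indicator {0<..<s} t \<partial>lborel) \<partial>?mu)
       = (\<integral>\<^sup>+ t. (\<integral>\<^sup>+ s. indicator {0<..<s} t \<partial>?mu) \<partial>lborel)"
    using Fubini'[OF meas_tri2[of F]] by simp
  also have "\<dots> = (\<integral>\<^sup>+ t. ennreal (indicator {0<..} t * (Lt - F t)) \<partial>lborel)"
  proof (rule nn_integral_cong)
    fix t :: real
    have "(\<lambda>s. indicator {0<..<s} t :: ennreal) = (\<lambda>s. indicator {0<..} t * indicator {t<..} s)"
      by (auto simp: fun_eq_iff split: split_indicator)
    then have "(\<integral>\<^sup>+ s. indicator {0<..<s} t \<partial>?mu) = indicator {0<..} t * emeasure ?mu {t<..}"
      by (simp add: nn_integral_cmult)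
    also have "\<dots> = ennreal (indicator {0<..} t * (Lt - F t))"
      by (simp add: Ioi split: split_indicator)
    finally show "(\<integral>\<^sup>+ s. indicator {0<..<s} t \<partial>?mu) = ennreal (indicator {0<..} t * (Lt - F t))" .
  qed
  finally have 1: "(\<integral>\<^sup>+ s. (\<integral>\<^sup>+ t. indicator {0<..<s} t \<partial>lborel) \<partial>?mu)
       = (\<integral>\<^sup>+ t. ennreal (indicator {0<..} t * (Lt - F t)) \<partial>lborel)" .
  have "(\<integral>\<^sup>+ s. (\<integral>\<^sup>+ t. indicator {0<..<s} t \<partial>lborel) \<partial>?mu)
      = (\<integral>\<^sup>+ s. ennreal (indicator {0<..} s * s) \<partial>?mu)"
  proof (rule nn_integral_cong)
    fix s :: real
    show "(\<integral>\<^sup>+ t. indicator {0<..<s} t \<partial>lborel) = ennreal (indicator {0<..} s * s)"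
      by (subst nn_integral_indicator) (auto simp: indicator_def)
  qed
  with 1 show ?thesis by simp
qed

lemma mono_meas: "mono (F::real\<Rightarrow>real) \<Longrightarrow> F \<in> borel_measurable lborel"
  using borel_measurable_mono[of F] by simp

lemma mono_lb: fixes F :: "real \<Rightarrow> real" assumes "mono F" "(F \<longlongrightarrow> Lb) at_bot" shows "Lb \<le> F x"
proof (rule tendsto_upperbound[OF assms(2)])
  show "eventually (\<lambda>y. F y \<le> F x) at_bot"
    unfolding eventually_at_bot_linorder
  proof (intro exI[of _ x] allI impI)
    fix y assume "y \<le> x" show "F y \<le> F x" using assms(1) \<open>y \<le> x\<close> by (rule monoD)
  qed
qed simp

lemma mono_ub: fixes F :: "real \<Rightarrow> real" assumes "mono F" "(F \<longlongrightarrow> Lt) at_top" shows "F x \<le> Lt"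
proof (rule tendsto_lowerbound[OF assms(2)])
  show "eventually (\<lambda>y. F x \<le> F y) at_top"
    unfolding eventually_at_top_linorder
  proof (intro exI[of _ x] allI impI)
    fix y assume "x \<le> y" show "F x \<le> F y" using assms(1) \<open>x \<le> y\<close> by (rule monoD)
  qed
qed simp

lemma core_int:
  fixes F :: "real \<Rightarrow> real"
  assumes mono: "mono F" and rc: "\<And>x. continuous (at_right x) F" and lim: "(F \<longlongrightarrow> Lb) at_bot"
    and limt: "(F \<longlongrightarrow> Lt) at_top" and int: "integrable (interval_measure F) (\<lambda>x. x)"
  shows "set_integrable lborel {..0} (\<lambda>t. F t - Lb)"
    and "set_integrable lborel {0<..} (\<lambda>t. Lt - F t)"
    and "(LINT t:{..0}|lborel. (F t - Lb)) = - (LINT x:{..0}|interval_measure F. x)"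
proof -
  let ?mu = "interval_measure F"
  have Fm: "F \<in> borel_measurable lborel" by (rule mono_meas[OF mono])
  have i1: "integrable ?mu (\<lambda>s. indicator {..0} s * (- s))"
    using integrable_mult_indicator[of "{..0}" ?mu "\<lambda>s. - s"] integrable_minus[OF int] by simp
  have i2: "integrable ?mu (\<lambda>s. indicator {0<..} s * s)"
    using integrable_mult_indicator[of "{0<..}" ?mu "\<lambda>s. s"] int by simp
  have n1: "(\<integral>\<^sup>+ s. ennreal (indicator {..0} s * (- s)) \<partial>?mu) = ennreal (integral\<^sup>L ?mu (\<lambda>s. indicator {..0} s * (- s)))"
    by (rule nn_integral_eq_integral[OF i1]) (auto simp: indicator_def)
  have n2: "(\<integral>\<^sup>+ s. ennreal (indicator {0<..} s * s) \<partial>?mu) = ennreal (integral\<^sup>L ?mu (\<lambda>s. indicator {0<..} s * s))"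
    by (rule nn_integral_eq_integral[OF i2]) (auto simp: indicator_def)
  have g1m: "(\<lambda>t. indicator {..0} t * (F t - Lb)) \<in> borel_measurable lborel"
    using Fm by measurable
  have g2m: "(\<lambda>t. indicator {0<..} t * (Lt - F t)) \<in> borel_measurable lborel"
    using Fm by measurable
  have g1p: "0 \<le> indicator {..0} t * (F t - Lb)" for t
    using mono_lb[OF mono lim, of t] by (simp add: indicator_def)
  have g2p: "0 \<le> indicator {0<..} t * (Lt - F t)" for t
    using mono_ub[OF mono limt, of t] by (simp add: indicator_def)
  have c1: "(\<integral>\<^sup>+ t. ennreal (indicator {..0} t * (F t - Lb)) \<partial>lborel) = ennreal (integral\<^sup>L ?mu (\<lambda>s. indicator {..0} s * (- s)))"
    using core_left[OF mono rc lim] n1 by simp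
  have c2: "(\<integral>\<^sup>+ t. ennreal (indicator {0<..} t * (Lt - F t)) \<partial>lborel) = ennreal (integral\<^sup>L ?mu (\<lambda>s. indicator {0<..} s * s))"
    using core_right[OF mono rc lim limt] n2 by simp
  have ig1: "integrable lborel (\<lambda>t. indicator {..0} t * (F t - Lb))"
  proof (rule integrableI_bounded[OF g1m])
    have "(\<integral>\<^sup>+ t. ennreal (norm (indicator {..0} t * (F t - Lb))) \<partial>lborel) = (\<integral>\<^sup>+ t. ennreal (indicator {..0} t * (F t - Lb)) \<partial>lborel)"
      by (rule nn_integral_cong) (simp add: g1p)
    then show "(\<integral>\<^sup>+ t. ennreal (norm (indicator {..0} t * (F t - Lb))) \<partial>lborel) < \<infinity>"
      using c1 by simp
  qed
  have ig2: "integrable lborel (\<lambda>t. indicator {0<..} t * (Lt - F t))"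
  proof (rule integrableI_bounded[OF g2m])
    have "(\<integral>\<^sup>+ t. ennreal (norm (indicator {0<..} t * (Lt - F t))) \<partial>lborel) = (\<integral>\<^sup>+ t. ennreal (indicator {0<..} t * (Lt - F t)) \<partial>lborel)"
      by (rule nn_integral_cong) (simp add: g2p)
    then show "(\<integral>\<^sup>+ t. ennreal (norm (indicator {0<..} t * (Lt - F t))) \<partial>lborel) < \<infinity>"
      using c2 by simp
  qed
  show "set_integrable lborel {..0} (\<lambda>t. F t - Lb)"
    using ig1 by (simp add: set_integrable_def)
  show "set_integrable lborel {0<..} (\<lambda>t. Lt - F t)"
    using ig2 by (simp add: set_integrable_def)
  have "ennreal (integral\<^sup>L lborel (\<lambda>t. indicator {..0} t * (F t - Lb))) = ennreal (integral\<^sup>L ?mu (\<lambda>s. indicator {..0} s * (- s)))"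
    using c1 nn_integral_eq_integral[OF ig1] g1p by simp
  moreover have "0 \<le> integral\<^sup>L lborel (\<lambda>t. indicator {..0} t * (F t - Lb))"
    by (rule integral_nonneg_AE) (simp add: g1p)
  moreover have "0 \<le> integral\<^sup>L ?mu (\<lambda>s. indicator {..0} s * (- s))"
    by (rule integral_nonneg_AE) (simp add: indicator_def)
  ultimately have "integral\<^sup>L lborel (\<lambda>t. indicator {..0} t * (F t - Lb)) = integral\<^sup>L ?mu (\<lambda>s. indicator {..0} s * (- s))"
    by simp
  also have "\<dots> = - integral\<^sup>L ?mu (\<lambda>s. indicator {..0} s * s)"
  proof -
    have "(\<lambda>s. indicator {..0} s * (- s)) = (\<lambda>s::real. - (indicator {..0} s * s))" by auto
    then show ?thesis by simp
  qed
  finally show "(LINT t:{..0}|lborel. (F t - Lb)) = - (LINT x:{..0}|interval_measure F. x)"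
    by (simp add: set_lebesgue_integral_def)
qed

lemma bounded_range_bound:
  fixes F :: "real \<Rightarrow> real"
  assumes "bounded (range F)" shows "\<exists>B. \<forall>x. \<bar>F x\<bar> \<le> B"
  using assms unfolding bounded_iff by auto

lemma Lspace_facts:
  assumes d: "ls_decomp H F1 F2"
  shows "\<exists>Lb Lt. (H \<longlongrightarrow> Lb) at_bot \<and> (H \<longlongrightarrow> Lt) at_top
      \<and> set_integrable lborel {..0} (\<lambda>t. H t - Lb)
      \<and> set_integrable lborel {0<..} (\<lambda>t. Lt - H t)
      \<and> (LINT t:{..0}|lborel. (H t - Lb)) = - ((LINT x:{..0}|interval_measure F1. x) - (LINT x:{..0}|interval_measure F2. x))
      \<and> H \<in> borel_measurable lborel \<and> (\<exists>B. \<forall>x. \<bar>H x\<bar> \<le> B)"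
proof -
  from d have m1: "mono F1" and m2: "mono F2" and b1: "bounded (range F1)" and b2: "bounded (range F2)"
    and rc1: "\<And>x. continuous (at_right x) F1" and rc2: "\<And>x. continuous (at_right x) F2"
    and H: "\<And>x. H x = F1 x - F2 x"
    and i1: "integrable (interval_measure F1) (\<lambda>x. x)" and i2: "integrable (interval_measure F2) (\<lambda>x. x)"
    unfolding ls_decomp_def by auto
  have Hf: "H = (\<lambda>x. F1 x - F2 x)" using H by (rule ext)
  define L1 where "L1 = Inf (range F1)"
  define L2 where "L2 = Inf (range F2)"
  define U1 where "U1 = Sup (range F1)"
  define U2 where "U2 = Sup (range F2)"
  have l1: "(F1 \<longlongrightarrow> L1) at_bot" unfolding L1_def by (rule lim_bot_mono[OF m1 bounded_imp_bdd_below[OF b1]])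
  have l2: "(F2 \<longlongrightarrow> L2) at_bot" unfolding L2_def by (rule lim_bot_mono[OF m2 bounded_imp_bdd_below[OF b2]])
  have u1: "(F1 \<longlongrightarrow> U1) at_top" unfolding U1_def by (rule lim_top_mono[OF m1 bounded_imp_bdd_above[OF b1]])
  have u2: "(F2 \<longlongrightarrow> U2) at_top" unfolding U2_def by (rule lim_top_mono[OF m2 bounded_imp_bdd_above[OF b2]])
  note c1 = core_int[OF m1 rc1 l1 u1 i1]
  note c2 = core_int[OF m2 rc2 l2 u2 i2]
  have "(H \<longlongrightarrow> L1 - L2) at_bot" unfolding Hf by (rule tendsto_diff[OF l1 l2])
  moreover have "(H \<longlongrightarrow> U1 - U2) at_top" unfolding Hf by (rule tendsto_diff[OF u1 u2])
  moreover have e1: "(\<lambda>t. H t - (L1 - L2)) = (\<lambda>t. (F1 t - L1) - (F2 t - L2))" unfolding Hf by (rule ext) simp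
  have "set_integrable lborel {..0} (\<lambda>t. H t - (L1 - L2))"
    unfolding e1 by (rule set_integral_diff(1)[OF c1(1) c2(1)])
  moreover have e2: "(\<lambda>t. (U1 - U2) - H t) = (\<lambda>t. (U1 - F1 t) - (U2 - F2 t))" unfolding Hf by (rule ext) simp
  have "set_integrable lborel {0<..} (\<lambda>t. (U1 - U2) - H t)"
    unfolding e2 by (rule set_integral_diff(1)[OF c1(2) c2(2)])
  moreover have "(LINT t:{..0}|lborel. (H t - (L1 - L2))) = - ((LINT x:{..0}|interval_measure F1. x) - (LINT x:{..0}|interval_measure F2. x))"
    unfolding e1 set_integral_diff(2)[OF c1(1) c2(1)] c1(3) c2(3) by simp
  moreover have "H \<in> borel_measurable lborel"
    unfolding Hf using mono_meas[OF m1] mono_meas[OF m2] by (rule borel_measurable_diff)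
  moreover have "\<exists>B. \<forall>x. \<bar>H x\<bar> \<le> B"
  proof -
    obtain B1 where B1: "\<And>x. \<bar>F1 x\<bar> \<le> B1" using bounded_range_bound[OF b1] by blast
    obtain B2 where B2: "\<And>x. \<bar>F2 x\<bar> \<le> B2" using bounded_range_bound[OF b2] by blast
    have "\<bar>H x\<bar> \<le> B1 + B2" for x
      using B1[of x] B2[of x] H[of x] by linarith
    then show ?thesis by blast
  qed
  ultimately show ?thesis by blast
qed

lemma Lspace_lim:
  assumes "H \<in> L_space"
  shows "(H \<longlongrightarrow> Lim at_bot H) at_bot"
    and "set_integrable lborel {..0} (\<lambda>t. H t - Lim at_bot H)"
    and "ls_moment H {..0} = - (LINT t:{..0}|lborel. (H t - Lim at_bot H))"
    and "H \<in> borel_measurable lborel"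
    and "\<exists>B. \<forall>x. \<bar>H x\<bar> \<le> B"
proof -
  have ex: "\<exists>r. \<exists>F1 F2. ls_decomp H F1 F2 \<and>
      r = (LINT x:{..0}|interval_measure F1. x) - (LINT x:{..0}|interval_measure F2. x)"
    using assms unfolding L_space_def by blast
  from someI_ex[OF ex] obtain F1 F2 where d: "ls_decomp H F1 F2" and
    r: "ls_moment H {..0} = (LINT x:{..0}|interval_measure F1. x) - (LINT x:{..0}|interval_measure F2. x)"
    unfolding ls_moment_def by blast
  from Lspace_facts[OF d] obtain Lb where l: "(H \<longlongrightarrow> Lb) at_bot"
    and si: "set_integrable lborel {..0} (\<lambda>t. H t - Lb)"
    and eq: "(LINT t:{..0}|lborel. (H t - Lb)) = - ((LINT x:{..0}|interval_measure F1. x) - (LINT x:{..0}|interval_measure F2. x))"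
    and me: "H \<in> borel_measurable lborel" and bd: "\<exists>B. \<forall>x. \<bar>H x\<bar> \<le> B"
    by blast
  have Lb: "Lim at_bot H = Lb" by (rule tendsto_Lim[OF trivial_limit_at_bot_linorder l])
  show "(H \<longlongrightarrow> Lim at_bot H) at_bot" using l Lb by simp
  show "set_integrable lborel {..0} (\<lambda>t. H t - Lim at_bot H)" using si Lb by simp
  show "ls_moment H {..0} = - (LINT t:{..0}|lborel. (H t - Lim at_bot H))" using r eq Lb by simp
  show "H \<in> borel_measurable lborel" by (rule me)
  show "\<exists>B. \<forall>x. \<bar>H x\<bar> \<le> B" by (rule bd)
qed

lemma bdd_int:
  fixes f :: "real \<Rightarrow> real"
  assumes m: "f \<in> borel_measurable lborel" and B: "\<And>x. \<bar>f x\<bar> \<le> B" and ab: "a \<le> b"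
  shows "set_integrable lborel {a<..b} f" and "\<bar>LINT x:{a<..b}|lborel. f x\<bar> \<le> B * (b - a)"
proof -
  show si: "set_integrable lborel {a<..b} f"
    unfolding set_integrable_def
  proof (rule integrableI_bounded_set[where A="{a<..b}" and B=B])
    show "(\<lambda>x. indicat_real {a<..b} x *\<^sub>R f x) \<in> borel_measurable lborel" using m by measurable
    show "emeasure lborel {a<..b} < \<infinity>" using ab by simp
    show "AE x\<in>{a<..b} in lborel. norm (indicat_real {a<..b} x *\<^sub>R f x) \<le> B"
      using B by (auto simp: indicator_def)
    show "AE x in lborel. x \<notin> {a<..b} \<longrightarrow> indicat_real {a<..b} x *\<^sub>R f x = 0"
      by (auto simp: indicator_def)
  qed simp
  have ci: "set_integrable lborel {a<..b} (\<lambda>x. B)"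
    unfolding set_integrable_def by (rule integrable_scaleR_left, rule integrable_real_indicator) (use ab in auto)
  have cm: "set_integrable lborel {a<..b} (\<lambda>x. - B)"
    unfolding set_integrable_def by (rule integrable_scaleR_left, rule integrable_real_indicator) (use ab in auto)
  have c: "(LINT x:{a<..b}|lborel. B) = B * (b - a)"
    using ab by (simp add: set_integral_const)
  have c2: "(LINT x:{a<..b}|lborel. - B) = - (B * (b - a))"
    using ab by (simp add: set_integral_const)
  have Bu: "f x \<le> B" for x using B[of x] unfolding abs_le_iff by linarith
  have Bl: "- B \<le> f x" for x using B[of x] unfolding abs_le_iff by linarith
  have "(LINT x:{a<..b}|lborel. f x) \<le> (LINT x:{a<..b}|lborel. B)"
    by (rule set_integral_mono[OF si ci]) (rule Bu)
  moreover have "(LINT x:{a<..b}|lborel. - B) \<le> (LINT x:{a<..b}|lborel. f x)"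
    by (rule set_integral_mono[OF cm si]) (rule Bl)
  ultimately show "\<bar>LINT x:{a<..b}|lborel. f x\<bar> \<le> B * (b - a)"
    using c c2 by linarith
qed

lemma left_int:
  fixes f :: "real \<Rightarrow> real"
  assumes m: "f \<in> borel_measurable lborel" and B: "\<And>x. \<bar>f x\<bar> \<le> B"
    and si: "set_integrable lborel {..0} f"
  shows "set_integrable lborel {..c} f"
    and "\<bar>(LINT x:{..c}|lborel. f x) - (LINT x:{..0}|lborel. f x)\<bar> \<le> \<bar>c\<bar> * B"
proof -
  have "set_integrable lborel {..c} f \<and> \<bar>(LINT x:{..c}|lborel. f x) - (LINT x:{..0}|lborel. f x)\<bar> \<le> \<bar>c\<bar> * B"
  proof (cases "0 \<le> c")
    case True
    note b = bdd_int[OF m B True]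
    have U: "{..c} = {..0} \<union> {0<..c}" using True by auto
    have s: "set_integrable lborel {..c} f" unfolding U
      by (rule set_integrable_Un[OF si b(1)]) auto
    have "(LINT x:{..c}|lborel. f x) = (LINT x:{..0}|lborel. f x) + (LINT x:{0<..c}|lborel. f x)"
      unfolding U by (rule set_integral_Un[OF _ si b(1)]) auto
    then have eq2: "(LINT x:{..c}|lborel. f x) - (LINT x:{..0}|lborel. f x) = (LINT x:{0<..c}|lborel. f x)" by simp
    have e: "B * c = \<bar>c\<bar> * B" using True by (simp add: mult.commute)
    show ?thesis using s b(2) eq2 e by simp
  next
    case False
    then have cl: "c \<le> 0" by simp
    note b = bdd_int[OF m B cl]
    have U: "{..0} = {..c} \<union> {c<..0}" using cl by auto
    have s: "set_integrable lborel {..c} f"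
      by (rule set_integrable_subset[OF si]) (auto simp: cl)
    have "(LINT x:{..0}|lborel. f x) = (LINT x:{..c}|lborel. f x) + (LINT x:{c<..0}|lborel. f x)"
      unfolding U by (rule set_integral_Un[OF _ s b(1)]) auto
    then have eq2: "(LINT x:{..c}|lborel. f x) - (LINT x:{..0}|lborel. f x) = - (LINT x:{c<..0}|lborel. f x)" by simp
    have e: "B * (- c) = \<bar>c\<bar> * B" using cl by (simp add: mult.commute)
    show ?thesis using s b(2) eq2 e by simp
  qed
  then show "set_integrable lborel {..c} f"
    and "\<bar>(LINT x:{..c}|lborel. f x) - (LINT x:{..0}|lborel. f x)\<bar> \<le> \<bar>c\<bar> * B" by auto
qed

definition AF :: "real \<Rightarrow> (real \<Rightarrow> real) \<Rightarrow> (real \<Rightarrow> real) \<Rightarrow> real" where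
  "AF \<alpha> F H = - (1 / \<alpha>) * (LINT y:{..VaR \<alpha> F}|lborel. (H y - Lim at_bot H))"

lemma sup_norm_ge:
  assumes "\<exists>B. \<forall>x. \<bar>H x\<bar> \<le> B" shows "\<bar>H x\<bar> \<le> sup_norm H"
proof -
  obtain B where B: "\<And>x. \<bar>H x\<bar> \<le> B" using assms by blast
  have "bdd_above (range (\<lambda>x. \<bar>H x\<bar>))" by (rule bdd_aboveI2[of _ _ B]) (rule B)
  then show ?thesis unfolding sup_norm_def by (rule cSUP_upper[OF UNIV_I])
qed

lemma normL_ge_sup: "sup_norm H \<le> normL H"
  unfolding normL_def by (rule max.cobounded1)

lemma normL_ge_mom: "\<bar>ls_moment H {..0}\<bar> \<le> normL H"
  unfolding normL_def by (meson max.cobounded1 max.cobounded2 order_trans)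

lemma lim_abs_le:
  fixes H :: "real \<Rightarrow> real"
  assumes l: "(H \<longlongrightarrow> L) at_bot" and S: "\<And>x. \<bar>H x\<bar> \<le> S" shows "\<bar>L\<bar> \<le> S"
proof (rule tendsto_upperbound[OF tendsto_rabs[OF l]])
  show "\<forall>\<^sub>F x in at_bot. \<bar>H x\<bar> \<le> S" by (rule always_eventually) (use S in blast)
qed simp

lemma AF_bound:
  assumes a: "0 < \<alpha>" and H: "H \<in> L_space" and K: "\<And>y. \<bar>H y - Lim at_bot H\<bar> \<le> K"
  shows "\<bar>AF \<alpha> F H\<bar> \<le> (1/\<alpha>) * (normL H + \<bar>VaR \<alpha> F\<bar> * K)"
proof -
  note LL = Lspace_lim[OF H]
  let ?L = "Lim at_bot H"
  let ?v = "VaR \<alpha> F"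
  have gm: "(\<lambda>t. H t - ?L) \<in> borel_measurable lborel" using LL(4) by measurable
  note li = left_int[OF gm K LL(2), of ?v]
  have "\<bar>LINT t:{..0}|lborel. (H t - ?L)\<bar> = \<bar>ls_moment H {..0}\<bar>" using LL(3) by simp
  also have "\<dots> \<le> normL H" by (rule normL_ge_mom)
  finally have i0: "\<bar>LINT t:{..0}|lborel. (H t - ?L)\<bar> \<le> normL H" .
  have iv: "\<bar>LINT t:{..?v}|lborel. (H t - ?L)\<bar> \<le> normL H + \<bar>?v\<bar> * K"
    using i0 li(2) by linarith
  have "\<bar>AF \<alpha> F H\<bar> = (1/\<alpha>) * \<bar>LINT t:{..?v}|lborel. (H t - ?L)\<bar>"
    unfolding AF_def using a by (simp add: abs_mult)
  also have "\<dots> \<le> (1/\<alpha>) * (normL H + \<bar>?v\<bar> * K)"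
    by (rule mult_left_mono[OF iv]) (use a in simp)
  finally show ?thesis .
qed

lemma AF_linear:
  assumes a: "0 < \<alpha>"
  shows "bounded_linear_L (AF \<alpha> F)"
  unfolding bounded_linear_L_def
proof (intro conjI ballI allI)
  fix H1 H2 and c d :: real
  assume H1: "H1 \<in> L_space" and H2: "H2 \<in> L_space"
  note A = Lspace_lim[OF H1] and B = Lspace_lim[OF H2]
  let ?L1 = "Lim at_bot H1" and ?L2 = "Lim at_bot H2"
  let ?v = "VaR \<alpha> F"
  have l: "((\<lambda>x. c * H1 x + d * H2 x) \<longlongrightarrow> c * ?L1 + d * ?L2) at_bot"
    by (intro tendsto_add tendsto_mult tendsto_const A(1) B(1))
  have L: "Lim at_bot (\<lambda>x. c * H1 x + d * H2 x) = c * ?L1 + d * ?L2"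
    by (rule tendsto_Lim[OF trivial_limit_at_bot_linorder l])
  obtain B1 where B1: "\<And>x. \<bar>H1 x\<bar> \<le> B1" using A(5) by blast
  obtain B2 where B2: "\<And>x. \<bar>H2 x\<bar> \<le> B2" using B(5) by blast
  have g1m: "(\<lambda>t. H1 t - ?L1) \<in> borel_measurable lborel" using A(4) by measurable
  have g2m: "(\<lambda>t. H2 t - ?L2) \<in> borel_measurable lborel" using B(4) by measurable
  have K1: "\<bar>H1 t - ?L1\<bar> \<le> B1 + \<bar>?L1\<bar>" for t using B1[of t] by linarith
  have K2: "\<bar>H2 t - ?L2\<bar> \<le> B2 + \<bar>?L2\<bar>" for t using B2[of t] by linarith
  have s1: "set_integrable lborel {..?v} (\<lambda>t. H1 t - ?L1)" by (rule left_int(1)[OF g1m K1 A(2)])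
  have s2: "set_integrable lborel {..?v} (\<lambda>t. H2 t - ?L2)" by (rule left_int(1)[OF g2m K2 B(2)])
  have e: "(\<lambda>y. (c * H1 y + d * H2 y) - (c * ?L1 + d * ?L2)) = (\<lambda>y. c * (H1 y - ?L1) + d * (H2 y - ?L2))"
    by (rule ext) (simp add: algebra_simps)
  have s1': "set_integrable lborel {..?v} (\<lambda>t. c * (H1 t - ?L1))" by (rule set_integrable_mult_right) (rule s1)
  have s2': "set_integrable lborel {..?v} (\<lambda>t. d * (H2 t - ?L2))" by (rule set_integrable_mult_right) (rule s2)
  have "(LINT y:{..?v}|lborel. ((c * H1 y + d * H2 y) - Lim at_bot (\<lambda>x. c * H1 x + d * H2 x)))
      = (LINT y:{..?v}|lborel. (c * (H1 y - ?L1) + d * (H2 y - ?L2)))"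
    unfolding L e by (rule refl)
  also have "\<dots> = (LINT y:{..?v}|lborel. c * (H1 y - ?L1)) + (LINT y:{..?v}|lborel. d * (H2 y - ?L2))"
    by (rule set_integral_add(2)[OF s1' s2'])
  also have "\<dots> = c * (LINT y:{..?v}|lborel. (H1 y - ?L1)) + d * (LINT y:{..?v}|lborel. (H2 y - ?L2))"
    by (simp only: set_integral_mult_right)
  finally have I: "(LINT y:{..?v}|lborel. ((c * H1 y + d * H2 y) - Lim at_bot (\<lambda>x. c * H1 x + d * H2 x)))
      = c * (LINT y:{..?v}|lborel. (H1 y - ?L1)) + d * (LINT y:{..?v}|lborel. (H2 y - ?L2))" .
  show "AF \<alpha> F (\<lambda>x. c * H1 x + d * H2 x) = c * AF \<alpha> F H1 + d * AF \<alpha> F H2"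
    unfolding AF_def I by (simp add: algebra_simps)
next
  show "\<exists>C. \<forall>H\<in>L_space. \<bar>AF \<alpha> F H\<bar> \<le> C * normL H"
  proof (intro exI ballI)
    fix H assume H: "H \<in> L_space"
    note A = Lspace_lim[OF H]
    let ?L = "Lim at_bot H"
    let ?S = "sup_norm H"
    let ?v = "VaR \<alpha> F"
    have hs: "\<bar>H x\<bar> \<le> ?S" for x by (rule sup_norm_ge[OF A(5)])
    have ls: "\<bar>?L\<bar> \<le> ?S" by (rule lim_abs_le[OF A(1) hs])
    have K: "\<bar>H y - ?L\<bar> \<le> 2 * ?S" for y using hs[of y] ls by linarith
    have S0: "0 \<le> ?S" using hs[of 0] by linarith
    have Sn: "?S \<le> normL H" by (rule normL_ge_sup)
    have "\<bar>AF \<alpha> F H\<bar> \<le> (1/\<alpha>) * (normL H + \<bar>?v\<bar> * (2 * ?S))" by (rule AF_bound[OF a H K])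
    also have "\<dots> \<le> (1/\<alpha>) * (normL H + \<bar>?v\<bar> * (2 * normL H))"
      using a Sn by (intro mult_left_mono add_left_mono mult_left_mono[where c="\<bar>?v\<bar>"]) auto
    also have "\<dots> = ((1 + 2 * \<bar>?v\<bar>) / \<alpha>) * normL H" by (simp add: algebra_simps add_divide_distrib)
    finally show "\<bar>AF \<alpha> F H\<bar> \<le> ((1 + 2 * \<bar>VaR \<alpha> F\<bar>) / \<alpha>) * normL H" .
  qed
qed

definition fm :: "(real \<Rightarrow> real) \<Rightarrow> bool" where
  "fm G \<longleftrightarrow> set_integrable lborel {..0} G \<and> set_integrable lborel {0<..} (\<lambda>t. 1 - G t)"

lemma dist_basic:
  assumes "is_dist_fn G"
  shows "mono G" "\<And>x. continuous (at_right x) G" "(G \<longlongrightarrow> 0) at_bot" "(G \<longlongrightarrow> 1) at_top"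
    "\<And>x. 0 \<le> G x" "\<And>x. G x \<le> 1"
proof -
  show m: "mono G" and rc: "\<And>x. continuous (at_right x) G" and l0: "(G \<longlongrightarrow> 0) at_bot" and l1: "(G \<longlongrightarrow> 1) at_top"
    using assms unfolding is_dist_fn_def by auto
  show "\<And>x. 0 \<le> G x" using mono_lb[OF m l0] .
  show "\<And>x. G x \<le> 1" using mono_ub[OF m l1] .
qed

lemma VaR_props:
  assumes G: "is_dist_fn G" and a0: "0 < \<alpha>" and a1: "\<alpha> < 1"
  shows "\<And>y. y < VaR \<alpha> G \<Longrightarrow> G y < \<alpha>"
    and "\<And>y. VaR \<alpha> G \<le> y \<Longrightarrow> \<alpha> \<le> G y"
proof -
  note D = dist_basic[OF G]
  let ?S = "{y. \<alpha> \<le> G y}"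
  have "\<forall>\<^sub>F x in at_top. \<alpha> < G x" by (rule order_tendstoD(1)[OF D(4) a1])
  then obtain N where "\<And>n. N \<le> n \<Longrightarrow> \<alpha> < G n" unfolding eventually_at_top_linorder by blast
  then have ne: "?S \<noteq> {}" by (metis (mono_tags, lifting) empty_iff less_imp_le mem_Collect_eq order_refl)
  have "\<forall>\<^sub>F x in at_bot. G x < \<alpha>" by (rule order_tendstoD(2)[OF D(3) a0])
  then obtain M where M: "\<And>n. n \<le> M \<Longrightarrow> G n < \<alpha>" unfolding eventually_at_bot_linorder by blast
  have bb: "bdd_below ?S"
  proof (rule bdd_belowI[of _ M])
    fix s assume "s \<in> ?S"
    then have "\<alpha> \<le> G s" by simp
    then show "M \<le> s" using M[of s] by fastforce
  qed
  show lt: "G y < \<alpha>" if "y < VaR \<alpha> G" for y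
  proof (rule ccontr)
    assume "\<not> G y < \<alpha>"
    then have "y \<in> ?S" by simp
    then have "VaR \<alpha> G \<le> y" unfolding VaR_def by (rule cInf_lower[OF _ bb])
    with that show False by simp
  qed
  have gt: "\<alpha> \<le> G y" if "VaR \<alpha> G < y" for y
  proof -
    from that have "Inf ?S < y" unfolding VaR_def .
    from cInf_lessD[OF ne this] obtain s where s: "\<alpha> \<le> G s" "s < y" by auto
    have "G s \<le> G y" by (rule monoD[OF D(1)]) (use \<open>s < y\<close> in simp)
    with s show ?thesis by simp
  qed
  have at: "\<alpha> \<le> G (VaR \<alpha> G)"
  proof (rule tendsto_lowerbound)
    show "(G \<longlongrightarrow> G (VaR \<alpha> G)) (at_right (VaR \<alpha> G))"
      using D(2)[of "VaR \<alpha> G"] by (simp add: continuous_within)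
    show "\<forall>\<^sub>F x in at_right (VaR \<alpha> G). \<alpha> \<le> G x"
      unfolding eventually_at_filter by (rule always_eventually) (auto intro: gt)
  qed (rule trivial_limit_at_right_real)
  show "\<alpha> \<le> G y" if "VaR \<alpha> G \<le> y" for y
  proof (cases "VaR \<alpha> G = y")
    case True then show ?thesis using at by simp
  next
    case False then show ?thesis using that gt by simp
  qed
qed

lemma fm_int_id:
  assumes G: "is_dist_fn G" and f: "fm G"
  shows "integrable (interval_measure G) (\<lambda>x. x)"
proof -
  note D = dist_basic[OF G]
  let ?mu = "interval_measure G"
  have s1: "integrable lborel (\<lambda>t. indicator {..0} t * G t)"
    using f unfolding fm_def set_integrable_def by simp
  have s2: "integrable lborel (\<lambda>t. indicator {0<..} t * (1 - G t))"
    using f unfolding fm_def set_integrable_def by simp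
  have p1: "0 \<le> indicator {..0} t * G t" for t using D(5)[of t] by (simp add: indicator_def)
  have p2: "0 \<le> indicator {0<..} t * (1 - G t)" for t using D(6)[of t] by (simp add: indicator_def)
  have cl: "(\<integral>\<^sup>+ t. ennreal (indicator {..0} t * G t) \<partial>lborel) = (\<integral>\<^sup>+ s. ennreal (indicator {..0} s * (- s)) \<partial>?mu)"
    using core_left[OF D(1) D(2) D(3)] by simp
  have cr: "(\<integral>\<^sup>+ t. ennreal (indicator {0<..} t * (1 - G t)) \<partial>lborel) = (\<integral>\<^sup>+ s. ennreal (indicator {0<..} s * s) \<partial>?mu)"
    using core_right[OF D(1) D(2) D(3) D(4)] by simp
  have f1: "(\<integral>\<^sup>+ t. ennreal (indicator {..0} t * G t) \<partial>lborel) < \<infinity>"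
    using nn_integral_eq_integral[OF s1] p1 by simp
  have f2: "(\<integral>\<^sup>+ t. ennreal (indicator {0<..} t * (1 - G t)) \<partial>lborel) < \<infinity>"
    using nn_integral_eq_integral[OF s2] p2 by simp
  have split: "ennreal (norm x) = ennreal (indicator {..0} x * (- x)) + ennreal (indicator {0<..} x * x)" for x :: real
    by (cases "x \<le> 0") (simp_all add: indicator_def)
  have "(\<integral>\<^sup>+ x. ennreal (norm x) \<partial>?mu) = (\<integral>\<^sup>+ x. ennreal (indicator {..0} x * (- x)) + ennreal (indicator {0<..} x * x) \<partial>?mu)"
    by (simp only: split)
  also have "\<dots> = (\<integral>\<^sup>+ x. ennreal (indicator {..0} x * (- x)) \<partial>?mu) + (\<integral>\<^sup>+ x. ennreal (indicator {0<..} x * x) \<partial>?mu)"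
    by (rule nn_integral_add) measurable
  also have "\<dots> < \<infinity>" using f1 f2 cl cr by simp
  finally show ?thesis by (intro integrableI_bounded) simp_all
qed

lemma diff_Lspace:
  assumes G: "is_dist_fn G" "fm G" and F: "is_dist_fn F" "fm F"
  shows "(\<lambda>x. G x - F x) \<in> L_space" and "Lim at_bot (\<lambda>x. G x - F x) = 0"
proof -
  note DG = dist_basic[OF G(1)] and DF = dist_basic[OF F(1)]
  have bG: "bounded (range G)" unfolding bounded_iff
  proof (intro exI ballI)
    fix y assume "y \<in> range G"
    then obtain x where "y = G x" by blast
    then show "norm y \<le> 1" using DG(5)[of x] DG(6)[of x] by simp
  qed
  have bF: "bounded (range F)" unfolding bounded_iff
  proof (intro exI ballI)
    fix y assume "y \<in> range F"
    then obtain x where "y = F x" by blast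
    then show "norm y \<le> 1" using DF(5)[of x] DF(6)[of x] by simp
  qed
  have "ls_decomp (\<lambda>x. G x - F x) G F"
    unfolding ls_decomp_def using DG(1,2) DF(1,2) bG bF fm_int_id[OF G] fm_int_id[OF F] by simp
  then show "(\<lambda>x. G x - F x) \<in> L_space" unfolding L_space_def by blast
  have "((\<lambda>x. G x - F x) \<longlongrightarrow> 0 - 0) at_bot" by (rule tendsto_diff[OF DG(3) DF(3)])
  then show "Lim at_bot (\<lambda>x. G x - F x) = 0" by (intro tendsto_Lim) simp_all
qed

lemma fm_left_int:
  assumes G: "is_dist_fn G" and f: "fm G"
  shows "set_integrable lborel {..c} G"
proof -
  note D = dist_basic[OF G]
  have B: "\<bar>G x\<bar> \<le> 1" for x using D(5)[of x] D(6)[of x] by simp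
  show ?thesis by (rule left_int(1)[OF mono_meas[OF D(1)] B]) (use f in \<open>simp add: fm_def\<close>)
qed

lemma empirical_facts:
  assumes "G \<in> empirical"
  shows "is_dist_fn G" and "fm G"
proof -
  from assms obtain t :: nat and x :: "nat \<Rightarrow> real" where t: "1 \<le> t"
    and Gd: "G = (\<lambda>y. (\<Sum>s=1..t. if x s \<le> y then 1 else 0) / real t)"
    unfolding empirical_def by blast
  define X where "X = 1 + (\<Sum>s=1..t. \<bar>x s\<bar>)"
  have xs: "- X < x s \<and> x s < X" if "s \<in> {1..t}" for s
  proof -
    have "\<bar>x s\<bar> \<le> (\<Sum>s=1..t. \<bar>x s\<bar>)" by (rule member_le_sum[OF that]) simp_all
    then show ?thesis unfolding X_def by linarith
  qed
  have X0: "0 \<le> X" unfolding X_def by (simp add: sum_nonneg)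
  have tp: "0 < real t" using t by simp
  have lo: "G y = 0" if "y \<le> - X" for y
  proof -
    have "(\<Sum>s=1..t. if x s \<le> y then 1 else (0::real)) = (\<Sum>s=1..t. 0)"
    proof (rule sum.cong[OF refl])
      fix s assume "s \<in> {1..t}" then show "(if x s \<le> y then 1 else (0::real)) = 0"
        using xs[of s] that by simp
    qed
    then show ?thesis unfolding Gd by simp
  qed
  have hi: "G y = 1" if "X \<le> y" for y
  proof -
    have "(\<Sum>s=1..t. if x s \<le> y then 1 else (0::real)) = (\<Sum>s=1..t. 1)"
    proof (rule sum.cong[OF refl])
      fix s assume "s \<in> {1..t}" then show "(if x s \<le> y then 1 else (0::real)) = 1"
        using xs[of s] that by simp
    qed
    then show ?thesis unfolding Gd using tp by simp
  qed
  have mono: "mono G"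
  proof (rule monoI)
    fix y z :: real assume yz: "y \<le> z"
    have "(\<Sum>s=1..t. if x s \<le> y then 1 else (0::real)) \<le> (\<Sum>s=1..t. if x s \<le> z then 1 else 0)"
      by (rule sum_mono) (use yz in auto)
    then show "G y \<le> G z" unfolding Gd using tp by (simp add: divide_right_mono)
  qed
  have rc: "continuous (at_right y) G" for y
  proof -
    have ev: "\<forall>\<^sub>F z in at_right y. \<forall>s\<in>{1..t}. (x s \<le> z) = (x s \<le> y)"
    proof (rule eventually_ball_finite[OF finite_atLeastAtMost], rule ballI)
      fix s assume "s \<in> {1..t}"
      show "\<forall>\<^sub>F z in at_right y. (x s \<le> z) = (x s \<le> y)"
      proof (cases "x s \<le> y")
        case True
        show ?thesis
        proof (rule eventually_mono[OF eventually_at_right_less[of y]])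
          fix z assume "y < z" then show "(x s \<le> z) = (x s \<le> y)" using True by simp
        qed
      next
        case False
        then have "y < x s" by simp
        then have "\<forall>\<^sub>F z in at_right y. z < x s"
          unfolding eventually_at_right[OF \<open>y < x s\<close>] by blast
        then show ?thesis
        proof (rule eventually_mono)
          fix z assume "z < x s" then show "(x s \<le> z) = (x s \<le> y)" using False by simp
        qed
      qed
    qed
    have "\<forall>\<^sub>F z in at_right y. G z = G y"
    proof (rule eventually_mono[OF ev])
      fix z assume h: "\<forall>s\<in>{1..t}. (x s \<le> z) = (x s \<le> y)"
      have "(\<Sum>s=1..t. if x s \<le> z then 1 else (0::real)) = (\<Sum>s=1..t. if x s \<le> y then 1 else 0)"
        by (rule sum.cong[OF refl]) (use h in simp)
      then show "G z = G y" unfolding Gd by simp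
    qed
    then have "(G \<longlongrightarrow> G y) (at_right y)" by (rule tendsto_eventually)
    then show ?thesis by (simp add: continuous_within)
  qed
  have l0: "(G \<longlongrightarrow> 0) at_bot"
  proof (rule tendsto_eventually)
    show "\<forall>\<^sub>F y in at_bot. G y = 0" unfolding eventually_at_bot_linorder
      by (rule exI[of _ "- X"]) (use lo in blast)
  qed
  have l1: "(G \<longlongrightarrow> 1) at_top"
  proof (rule tendsto_eventually)
    show "\<forall>\<^sub>F y in at_top. G y = 1" unfolding eventually_at_top_linorder
      by (rule exI[of _ X]) (use hi in blast)
  qed
  show dG: "is_dist_fn G" unfolding is_dist_fn_def using mono rc l0 l1 by blast
  note D = dist_basic[OF dG]
  have Gm: "G \<in> borel_measurable lborel" by (rule mono_meas[OF mono])
  have i1: "set_integrable lborel {..0} G"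
    unfolding set_integrable_def
  proof (rule integrableI_bounded_set[where A="{-X<..0}" and B=1])
    show "(\<lambda>y. indicat_real {..0} y *\<^sub>R G y) \<in> borel_measurable lborel" using Gm by measurable
    show "emeasure lborel {-X<..0} < \<infinity>" using X0 by simp
    show "AE y\<in>{-X<..0} in lborel. norm (indicat_real {..0} y *\<^sub>R G y) \<le> 1"
    proof (rule AE_I2, rule impI)
      fix y show "norm (indicat_real {..0} y *\<^sub>R G y) \<le> 1" using D(5)[of y] D(6)[of y] by (simp add: indicator_def)
    qed
    show "AE y in lborel. y \<notin> {-X<..0} \<longrightarrow> indicat_real {..0} y *\<^sub>R G y = 0"
    proof (rule AE_I2, rule impI)
      fix y assume "y \<notin> {-X<..0}"
      then have "y > 0 \<or> y \<le> - X" by auto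
      then show "indicat_real {..0} y *\<^sub>R G y = 0" using lo[of y] by (auto simp: indicator_def)
    qed
  qed simp
  have i2: "set_integrable lborel {0<..} (\<lambda>y. 1 - G y)"
    unfolding set_integrable_def
  proof (rule integrableI_bounded_set[where A="{0<..X}" and B=1])
    show "(\<lambda>y. indicat_real {0<..} y *\<^sub>R (1 - G y)) \<in> borel_measurable lborel" using Gm by measurable
    show "emeasure lborel {0<..X} < \<infinity>" using X0 by simp
    show "AE y\<in>{0<..X} in lborel. norm (indicat_real {0<..} y *\<^sub>R (1 - G y)) \<le> 1"
    proof (rule AE_I2, rule impI)
      fix y show "norm (indicat_real {0<..} y *\<^sub>R (1 - G y)) \<le> 1" using D(5)[of y] D(6)[of y] by (simp add: indicator_def)
    qed
    show "AE y in lborel. y \<notin> {0<..X} \<longrightarrow> indicat_real {0<..} y *\<^sub>R (1 - G y) = 0"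
    proof (rule AE_I2, rule impI)
      fix y assume "y \<notin> {0<..X}"
      then have "y \<le> 0 \<or> X \<le> y" by auto
      then show "indicat_real {0<..} y *\<^sub>R (1 - G y) = 0" using hi[of y] by (auto simp: indicator_def)
    qed
  qed simp
  show "fm G" unfolding fm_def using i1 i2 by blast
qed

lemma Lspace_dist_fm:
  assumes G: "is_dist_fn G" and L: "G \<in> L_space"
  shows "fm G"
proof -
  note D = dist_basic[OF G]
  from L obtain F1 F2 where d: "ls_decomp G F1 F2" unfolding L_space_def by blast
  from Lspace_facts[OF d] obtain Lb Lt where lb: "(G \<longlongrightarrow> Lb) at_bot" and lt: "(G \<longlongrightarrow> Lt) at_top"
    and s1: "set_integrable lborel {..0} (\<lambda>t. G t - Lb)" and s2: "set_integrable lborel {0<..} (\<lambda>t. Lt - G t)"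
    by blast
  have "Lb = 0" by (rule tendsto_unique[OF trivial_limit_at_bot_linorder lb D(3)])
  moreover have "Lt = 1" by (rule tendsto_unique[OF trivial_limit_at_top_linorder lt D(4)])
  ultimately show ?thesis unfolding fm_def using s1 s2 by simp
qed

lemma mixture_repr:
  assumes "F \<in> mixtures K Fs"
  shows "\<exists>p. (\<forall>i\<in>{1..K}. 0 \<le> p i) \<and> (\<Sum>i=1..K. p i) = 1 \<and> F = (\<lambda>y. \<Sum>i=1..K. p i * Fs i y)"
  using assms unfolding mixtures_def prob_simplex_def by blast

lemma mixture_facts:
  assumes F: "F \<in> mixtures K Fs" and dF: "\<forall>i\<in>{1..K}. is_dist_fn (Fs i)" and fF: "\<forall>i\<in>{1..K}. fm (Fs i)"
  shows "is_dist_fn F" and "fm F"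
proof -
  obtain p where p0': "\<forall>i\<in>{1..K}. 0 \<le> p i" and ps: "(\<Sum>i=1..K. p i) = 1"
    and Fd: "F = (\<lambda>y. \<Sum>i=1..K. p i * Fs i y)" using mixture_repr[OF F] by blast
  have p0: "\<And>i. i \<in> {1..K} \<Longrightarrow> 0 \<le> p i" using p0' by blast
  have D: "\<And>i. i \<in> {1..K} \<Longrightarrow> mono (Fs i)"
    "\<And>i x. i \<in> {1..K} \<Longrightarrow> continuous (at_right x) (Fs i)"
    "\<And>i. i \<in> {1..K} \<Longrightarrow> (Fs i \<longlongrightarrow> 0) at_bot"
    "\<And>i. i \<in> {1..K} \<Longrightarrow> (Fs i \<longlongrightarrow> 1) at_top"
    using dist_basic dF by blast+
  have mono: "mono F"
  proof (rule monoI)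
    fix y z :: real assume yz: "y \<le> z"
    have "(\<Sum>i=1..K. p i * Fs i y) \<le> (\<Sum>i=1..K. p i * Fs i z)"
    proof (rule sum_mono)
      fix i assume i: "i \<in> {1..K}"
      have "Fs i y \<le> Fs i z" by (rule monoD[OF D(1)[OF i] yz])
      then show "p i * Fs i y \<le> p i * Fs i z" by (rule mult_left_mono) (rule p0[OF i])
    qed
    then show "F y \<le> F z" unfolding Fd .
  qed
  have rc: "continuous (at_right x) F" for x
    unfolding Fd
  proof (rule continuous_sum)
    fix i assume i: "i \<in> {1..K}"
    show "continuous (at_right x) (\<lambda>y. p i * Fs i y)"
      by (rule continuous_mult[OF continuous_const D(2)[OF i]])
  qed
  have "((\<lambda>y. \<Sum>i=1..K. p i * Fs i y) \<longlongrightarrow> (\<Sum>i=1..K. p i * 0)) at_bot"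
  proof (rule tendsto_sum)
    fix i assume i: "i \<in> {1..K}"
    show "((\<lambda>y. p i * Fs i y) \<longlongrightarrow> p i * 0) at_bot" by (rule tendsto_mult[OF tendsto_const D(3)[OF i]])
  qed
  then have l0: "(F \<longlongrightarrow> 0) at_bot" unfolding Fd by simp
  have "((\<lambda>y. \<Sum>i=1..K. p i * Fs i y) \<longlongrightarrow> (\<Sum>i=1..K. p i * 1)) at_top"
  proof (rule tendsto_sum)
    fix i assume i: "i \<in> {1..K}"
    show "((\<lambda>y. p i * Fs i y) \<longlongrightarrow> p i * 1) at_top" by (rule tendsto_mult[OF tendsto_const D(4)[OF i]])
  qed
  then have l1: "(F \<longlongrightarrow> 1) at_top" unfolding Fd using ps by simp
  show "is_dist_fn F" unfolding is_dist_fn_def using mono rc l0 l1 by blast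
  have e1: "(\<lambda>y. indicat_real {..0} y *\<^sub>R F y) = (\<lambda>y. \<Sum>i=1..K. p i * (indicat_real {..0} y *\<^sub>R Fs i y))"
  proof (rule ext)
    fix y
    have "indicat_real {..0} y *\<^sub>R F y = (\<Sum>i=1..K. indicat_real {..0} y * (p i * Fs i y))"
      unfolding Fd by (simp add: sum_distrib_left)
    also have "\<dots> = (\<Sum>i=1..K. p i * (indicat_real {..0} y *\<^sub>R Fs i y))"
      by (rule sum.cong[OF refl]) simp
    finally show "indicat_real {..0} y *\<^sub>R F y = (\<Sum>i=1..K. p i * (indicat_real {..0} y *\<^sub>R Fs i y))" .
  qed
  have i1: "set_integrable lborel {..0} F"
    unfolding set_integrable_def e1
  proof (rule Bochner_Integration.integrable_sum)
    fix i assume i: "i \<in> {1..K}"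
    have "integrable lborel (\<lambda>y. indicat_real {..0} y *\<^sub>R Fs i y)"
      using fF i unfolding fm_def set_integrable_def by blast
    then show "integrable lborel (\<lambda>y. p i * (indicat_real {..0} y *\<^sub>R Fs i y))"
      by (rule integrable_mult_right)
  qed
  have e2: "(\<lambda>y. indicat_real {0<..} y *\<^sub>R (1 - F y)) = (\<lambda>y. \<Sum>i=1..K. p i * (indicat_real {0<..} y *\<^sub>R (1 - Fs i y)))"
  proof (rule ext)
    fix y
    have "1 - F y = (\<Sum>i=1..K. p i) - (\<Sum>i=1..K. p i * Fs i y)" unfolding Fd ps by simp
    also have "\<dots> = (\<Sum>i=1..K. p i * (1 - Fs i y))" by (simp add: sum_subtractf right_diff_distrib)
    finally have "indicat_real {0<..} y *\<^sub>R (1 - F y) = (\<Sum>i=1..K. indicat_real {0<..} y * (p i * (1 - Fs i y)))"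
      by (simp add: sum_distrib_left)
    also have "\<dots> = (\<Sum>i=1..K. p i * (indicat_real {0<..} y *\<^sub>R (1 - Fs i y)))"
      by (rule sum.cong[OF refl]) simp
    finally show "indicat_real {0<..} y *\<^sub>R (1 - F y) = (\<Sum>i=1..K. p i * (indicat_real {0<..} y *\<^sub>R (1 - Fs i y)))" .
  qed
  have i2: "set_integrable lborel {0<..} (\<lambda>y. 1 - F y)"
    unfolding set_integrable_def e2
  proof (rule Bochner_Integration.integrable_sum)
    fix i assume i: "i \<in> {1..K}"
    have "integrable lborel (\<lambda>y. indicat_real {0<..} y *\<^sub>R (1 - Fs i y))"
      using fF i unfolding fm_def set_integrable_def by blast
    then show "integrable lborel (\<lambda>y. p i * (indicat_real {0<..} y *\<^sub>R (1 - Fs i y)))"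
      by (rule integrable_mult_right)
  qed
  show "fm F" unfolding fm_def using i1 i2 by blast
qed

lemma mixture_VaR_bound:
  assumes F: "F \<in> mixtures K Fs" and dF: "\<forall>i\<in>{1..K}. is_dist_fn (Fs i)" and fF: "\<forall>i\<in>{1..K}. fm (Fs i)"
    and a0: "0 < \<alpha>" and a1: "\<alpha> < 1"
  shows "\<bar>VaR \<alpha> F\<bar> \<le> (\<Sum>i=1..K. \<bar>VaR \<alpha> (Fs i)\<bar>)"
proof -
  obtain p where p0': "\<forall>i\<in>{1..K}. 0 \<le> p i" and ps: "(\<Sum>i=1..K. p i) = 1"
    and Fd: "F = (\<lambda>y. \<Sum>i=1..K. p i * Fs i y)" using mixture_repr[OF F] by blast
  have p0: "\<And>i. i \<in> {1..K} \<Longrightarrow> 0 \<le> p i" using p0' by blast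
  have dFF: "is_dist_fn F" by (rule mixture_facts(1)[OF F dF fF])
  note VF = VaR_props[OF dFF a0 a1]
  let ?Y = "\<Sum>i=1..K. \<bar>VaR \<alpha> (Fs i)\<bar>"
  have le: "\<bar>VaR \<alpha> (Fs i)\<bar> \<le> ?Y" if "i \<in> {1..K}" for i
    by (rule member_le_sum[OF that]) simp_all
  have up: "VaR \<alpha> F \<le> ?Y"
  proof (rule ccontr)
    assume "\<not> VaR \<alpha> F \<le> ?Y"
    then have "F ?Y < \<alpha>" by (intro VF(1)) simp
    moreover have "\<alpha> \<le> F ?Y"
    proof -
      have "(\<Sum>i=1..K. p i * \<alpha>) \<le> (\<Sum>i=1..K. p i * Fs i ?Y)"
      proof (rule sum_mono)
        fix i assume i: "i \<in> {1..K}"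
        have "VaR \<alpha> (Fs i) \<le> ?Y" using le[OF i] by linarith
        then have "\<alpha> \<le> Fs i ?Y" using VaR_props(2)[OF bspec[OF dF i] a0 a1] by blast
        then show "p i * \<alpha> \<le> p i * Fs i ?Y" by (rule mult_left_mono) (rule p0[OF i])
      qed
      then show ?thesis unfolding Fd sum_distrib_right[symmetric] ps by simp
    qed
    ultimately show False by simp
  qed
  have lo: "- ?Y \<le> VaR \<alpha> F"
  proof (rule ccontr)
    assume "\<not> - ?Y \<le> VaR \<alpha> F"
    then have v: "VaR \<alpha> F < - ?Y" by simp
    let ?v = "VaR \<alpha> F"
    have "\<alpha> \<le> F ?v" by (rule VF(2)) simp
    moreover have "F ?v < \<alpha>"
    proof -
      obtain j where j: "j \<in> {1..K}" "0 < p j"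
      proof (rule ccontr)
        assume "\<not> thesis"
        then have "\<forall>i\<in>{1..K}. p i \<le> 0" using that by force
        then have "(\<Sum>i=1..K. p i) \<le> 0" by (intro sum_nonpos) blast
        with ps show False by simp
      qed
      have lt: "Fs i ?v < \<alpha>" if i: "i \<in> {1..K}" for i
      proof -
        have "?v < VaR \<alpha> (Fs i)" using le[OF i] v by linarith
        then show ?thesis using VaR_props(1)[OF bspec[OF dF i] a0 a1] by blast
      qed
      have "(\<Sum>i=1..K. p i * Fs i ?v) < (\<Sum>i=1..K. p i * \<alpha>)"
      proof (rule sum_strict_mono_ex1)
        show "finite {1..K}" by simp
        show "\<forall>i\<in>{1..K}. p i * Fs i ?v \<le> p i * \<alpha>"
        proof
          fix i assume i: "i \<in> {1..K}"
          show "p i * Fs i ?v \<le> p i * \<alpha>" using lt[OF i] p0[OF i] by (intro mult_left_mono) simp_all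
        qed
        show "\<exists>i\<in>{1..K}. p i * Fs i ?v < p i * \<alpha>"
          using j lt[OF j(1)] by (intro bexI[of _ j]) simp_all
      qed
      then show ?thesis unfolding Fd sum_distrib_right[symmetric] ps by simp
    qed
    ultimately show False by simp
  qed
  from up lo show ?thesis by simp
qed

lemma set_int_upper:
  fixes g :: "real \<Rightarrow> real"
  assumes si: "set_integrable lborel A g" and A: "A \<in> sets lborel" and w: "0 \<le> w" and d: "0 \<le> \<delta>"
    and ae: "AE y in lborel. indicator A y * g y \<le> \<delta> * indicator {e<..e+w} y"
  shows "(LINT y:A|lborel. g y) \<le> \<delta> * w"
proof -
  have i1: "integrable lborel (\<lambda>y. indicator A y * g y)" using si unfolding set_integrable_def by simp
  have i2: "integrable lborel (\<lambda>y. \<delta> * indicat_real {e<..e+w} y)"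
    by (rule integrable_mult_right, rule integrable_real_indicator) (use w in simp_all)
  have "(LINT y:A|lborel. g y) = integral\<^sup>L lborel (\<lambda>y. indicator A y * g y)"
    unfolding set_lebesgue_integral_def by simp
  also have "\<dots> \<le> integral\<^sup>L lborel (\<lambda>y. \<delta> * indicat_real {e<..e+w} y)"
    by (rule integral_mono_AE[OF i1 i2 ae])
  also have "\<dots> = \<delta> * w" using w by simp
  finally show ?thesis .
qed

lemma set_int_nonneg:
  fixes g :: "real \<Rightarrow> real"
  assumes ae: "AE y in lborel. 0 \<le> indicator A y * g y"
  shows "0 \<le> (LINT y:A|lborel. g y)"
proof -
  have "0 \<le> integral\<^sup>L lborel (\<lambda>y. indicator A y * g y)" by (rule integral_nonneg_AE[OF ae])
  then show ?thesis unfolding set_lebesgue_integral_def by simp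
qed

lemma remainder:
  fixes G F :: "real \<Rightarrow> real"
  assumes a: "0 < \<alpha>" and b: "0 < b" and d: "0 \<le> \<delta>"
    and Gm: "mono G" and Gb: "\<And>y. \<bar>G y\<bar> \<le> 1"
    and Gge: "\<And>y. vG \<le> y \<Longrightarrow> \<alpha> \<le> G y" and Glt: "\<And>y. y < vG \<Longrightarrow> G y < \<alpha>"
    and Fge: "\<And>y. vF \<le> y \<Longrightarrow> \<alpha> \<le> F y" and Flt: "\<And>y. y < vF \<Longrightarrow> F y < \<alpha>"
    and cl: "\<And>y. \<bar>G y - F y\<bar> \<le> \<delta>"
    and Fup: "\<alpha> + \<delta> \<le> F (vF + b * \<delta>)" and Fdn: "0 < \<delta> \<Longrightarrow> F (vF - b * \<delta>) \<le> \<alpha> - \<delta>"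
    and Gi: "\<And>c. set_integrable lborel {..c} G"
  shows "\<bar>vG - vF - (1/\<alpha>) * ((LINT y:{..vG}|lborel. G y) - (LINT y:{..vF}|lborel. G y))\<bar> \<le> b / \<alpha> * \<delta>\<^sup>2"
proof -
  have Gmeas: "G \<in> borel_measurable lborel" by (rule mono_meas[OF Gm])
  have cm: "(\<lambda>y. \<alpha>) \<in> borel_measurable lborel" by simp
  have bw: "0 \<le> b * \<delta>" using b d by simp
  have key: "\<exists>D. vG - vF - (1/\<alpha>) * ((LINT y:{..vG}|lborel. G y) - (LINT y:{..vF}|lborel. G y)) = D / \<alpha>
               \<and> 0 \<le> D \<and> D \<le> \<delta> * (b * \<delta>)"
  proof (cases "vF \<le> vG")
    case True
    have U: "{..vG} = {..vF} \<union> {vF<..vG}" using True by auto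
    have sJ: "set_integrable lborel {vF<..vG} G" by (rule set_integrable_subset[OF Gi[of vG]]) auto
    have IU: "(LINT y:{..vG}|lborel. G y) = (LINT y:{..vF}|lborel. G y) + (LINT y:{vF<..vG}|lborel. G y)"
      unfolding U by (rule set_integral_Un[OF _ Gi sJ]) auto
    have sc: "set_integrable lborel {vF<..vG} (\<lambda>y. \<alpha>)"
      by (rule bdd_int(1)[OF cm _ True, of "\<bar>\<alpha>\<bar>"]) simp
    have sD: "set_integrable lborel {vF<..vG} (\<lambda>y. \<alpha> - G y)" by (rule set_integral_diff(1)[OF sc sJ])
    define D where "D = (LINT y:{vF<..vG}|lborel. (\<alpha> - G y))"
    have Dv: "D = \<alpha> * (vG - vF) - (LINT y:{vF<..vG}|lborel. G y)"
      unfolding D_def set_integral_diff(2)[OF sc sJ] using True by (simp add: set_integral_const)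
    have e: "vG - vF - (1/\<alpha>) * ((LINT y:{..vG}|lborel. G y) - (LINT y:{..vF}|lborel. G y)) = D / \<alpha>"
      unfolding IU Dv using a by (simp add: field_simps)
    have D0: "0 \<le> D" unfolding D_def
    proof (rule set_int_nonneg)
      show "AE y in lborel. 0 \<le> indicator {vF<..vG} y * (\<alpha> - G y)"
      proof (rule eventually_mono[OF AE_lborel_singleton[of vG]])
        fix y :: real assume "y \<noteq> vG"
        show "0 \<le> indicator {vF<..vG} y * (\<alpha> - G y)"
        proof (cases "y \<in> {vF<..vG}")
          case True
          then have "y < vG" using \<open>y \<noteq> vG\<close> by simp
          then have "G y < \<alpha>" by (rule Glt)
          then show ?thesis using True by simp
        qed simp
      qed
    qed
    have D1: "D \<le> \<delta> * (b * \<delta>)" unfolding D_def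
    proof (rule set_int_upper[OF sD _ bw d])
      show "AE y in lborel. indicator {vF<..vG} y * (\<alpha> - G y) \<le> \<delta> * indicator {vF<..vF + b * \<delta>} y"
      proof (rule eventually_mono[OF AE_lborel_singleton[of vG]])
        fix y :: real assume "y \<noteq> vG"
        show "indicator {vF<..vG} y * (\<alpha> - G y) \<le> \<delta> * indicator {vF<..vF + b * \<delta>} y"
        proof (cases "y \<in> {vF<..vG}")
          case False
          then have "indicator {vF<..vG} y = (0::real)" by simp
          moreover have "0 \<le> \<delta> * indicator {vF<..vF + b * \<delta>} y" using d by simp
          ultimately show ?thesis by simp
        next
          case True
          then have yv: "vF < y" by simp
          show ?thesis
          proof (cases "y \<le> vF + b * \<delta>")
            case True
            have "\<alpha> \<le> F y" using yv by (intro Fge) simp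
            then have "\<alpha> - G y \<le> \<delta>" using cl[of y] by linarith
            then show ?thesis using True yv \<open>y \<in> {vF<..vG}\<close> by (simp add: indicator_def)
          next
            case False
            have "G (vF + b * \<delta>) \<le> G y" by (rule monoD[OF Gm]) (use False in simp)
            moreover have "F (vF + b * \<delta>) - \<delta> \<le> G (vF + b * \<delta>)" using cl[of "vF + b * \<delta>"] by linarith
            ultimately have "\<alpha> - G y \<le> 0" using Fup by linarith
            then show ?thesis using d \<open>y \<in> {vF<..vG}\<close> by (simp add: indicator_def)
          qed
        qed
      qed
    qed simp
    show ?thesis using e D0 D1 by blast
  next
    case False
    then have le: "vG \<le> vF" by simp
    have U: "{..vF} = {..vG} \<union> {vG<..vF}" using le by auto
    have sJ: "set_integrable lborel {vG<..vF} G" by (rule set_integrable_subset[OF Gi[of vF]]) auto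
    have IU: "(LINT y:{..vF}|lborel. G y) = (LINT y:{..vG}|lborel. G y) + (LINT y:{vG<..vF}|lborel. G y)"
      unfolding U by (rule set_integral_Un[OF _ Gi sJ]) auto
    have sc: "set_integrable lborel {vG<..vF} (\<lambda>y. \<alpha>)"
      by (rule bdd_int(1)[OF cm _ le, of "\<bar>\<alpha>\<bar>"]) simp
    have sD: "set_integrable lborel {vG<..vF} (\<lambda>y. G y - \<alpha>)" by (rule set_integral_diff(1)[OF sJ sc])
    define D where "D = (LINT y:{vG<..vF}|lborel. (G y - \<alpha>))"
    have Dv: "D = (LINT y:{vG<..vF}|lborel. G y) - \<alpha> * (vF - vG)"
      unfolding D_def set_integral_diff(2)[OF sJ sc] using le by (simp add: set_integral_const)
    have e: "vG - vF - (1/\<alpha>) * ((LINT y:{..vG}|lborel. G y) - (LINT y:{..vF}|lborel. G y)) = D / \<alpha>"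
      unfolding IU Dv using a by (simp add: field_simps)
    have D0: "0 \<le> D" unfolding D_def
    proof (rule set_int_nonneg)
      show "AE y in lborel. 0 \<le> indicator {vG<..vF} y * (G y - \<alpha>)"
      proof (rule AE_I2)
        fix y :: real
        show "0 \<le> indicator {vG<..vF} y * (G y - \<alpha>)"
        proof (cases "y \<in> {vG<..vF}")
          case True
          then have "\<alpha> \<le> G y" by (intro Gge) simp
          then show ?thesis using True by simp
        qed simp
      qed
    qed
    have D1: "D \<le> \<delta> * (b * \<delta>)" unfolding D_def
    proof (rule set_int_upper[OF sD _ bw d])
      show "AE y in lborel. indicator {vG<..vF} y * (G y - \<alpha>) \<le> \<delta> * indicator {vF - b * \<delta><..vF - b * \<delta> + b * \<delta>} y"
      proof (rule eventually_mono[OF AE_lborel_singleton[of vF]])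
        fix y :: real assume "y \<noteq> vF"
        show "indicator {vG<..vF} y * (G y - \<alpha>) \<le> \<delta> * indicator {vF - b * \<delta><..vF - b * \<delta> + b * \<delta>} y"
        proof (cases "y \<in> {vG<..vF}")
          case False
          then have "indicator {vG<..vF} y = (0::real)" by simp
          moreover have "0 \<le> \<delta> * indicator {vF - b * \<delta><..vF - b * \<delta> + b * \<delta>} y" using d by simp
          ultimately show ?thesis by simp
        next
          case True
          then have yv: "y < vF" using \<open>y \<noteq> vF\<close> by simp
          show ?thesis
          proof (cases "vF - b * \<delta> < y")
            case True
            have "F y < \<alpha>" by (rule Flt[OF yv])
            then have "G y - \<alpha> \<le> \<delta>" using cl[of y] by linarith
            then show ?thesis using True yv \<open>y \<in> {vG<..vF}\<close> by (simp add: indicator_def)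
          next
            case False
            have h1: "G y \<le> G (vF - b * \<delta>)" by (rule monoD[OF Gm]) (use False in simp)
            have h2: "G (vF - b * \<delta>) \<le> F (vF - b * \<delta>) + \<delta>" using cl[of "vF - b * \<delta>"] by linarith
            have "G y - \<alpha> \<le> 0"
            proof (cases "\<delta> = 0")
              case True
              have "F y < \<alpha>" by (rule Flt[OF yv])
              then show ?thesis using cl[of y] True by linarith
            next
              case False
              then have "0 < \<delta>" using d by simp
              from Fdn[OF this] show ?thesis using h1 h2 by linarith
            qed
            then show ?thesis using d \<open>y \<in> {vG<..vF}\<close> by (simp add: indicator_def)
          qed
        qed
      qed
    qed simp
    show ?thesis using e D0 D1 by blast
  qed
  then obtain D where e: "vG - vF - (1/\<alpha>) * ((LINT y:{..vG}|lborel. G y) - (LINT y:{..vF}|lborel. G y)) = D / \<alpha>"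
    and D0: "0 \<le> D" and D1: "D \<le> \<delta> * (b * \<delta>)" by blast
  have "\<bar>D / \<alpha>\<bar> = D / \<alpha>" using D0 a by simp
  also have "\<dots> \<le> (\<delta> * (b * \<delta>)) / \<alpha>" using D1 a by (simp add: divide_right_mono)
  also have "\<dots> = b / \<alpha> * \<delta>\<^sup>2" by (simp add: power2_eq_square)
  finally show ?thesis unfolding e .
qed

lemma sup_norm_sym: "sup_norm (\<lambda>x. F x - G x) = sup_norm (\<lambda>x. G x - F x)"
proof -
  have "(\<lambda>x. \<bar>F x - G x\<bar>) = (\<lambda>x. \<bar>G x - F x\<bar>)" by (rule ext) (rule abs_minus_commute)
  then show ?thesis unfolding sup_norm_def by (rule arg_cong[where f="\<lambda>f. Sup (range f)"])
qed

lemma dist_diff_bound: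
  assumes "is_dist_fn F" "is_dist_fn G"
  shows "\<exists>B. \<forall>x. \<bar>F x - G x\<bar> \<le> B"
proof -
  note A = dist_basic[OF assms(1)] and B = dist_basic[OF assms(2)]
  have "\<bar>F x - G x\<bar> \<le> 1" for x using A(5)[of x] A(6)[of x] B(5)[of x] B(6)[of x] by linarith
  then show ?thesis by blast
qed

theorem proposition26:
  fixes K :: nat and Fs :: "nat \<Rightarrow> real \<Rightarrow> real"
    and \<alpha> b\<^sub>\<alpha> M\<^sub>\<alpha> M0 :: real
  assumes "1 \<le> K"
    and "\<forall>i\<in>{1..K}. is_dist_fn (Fs i)"
    and "\<forall>i\<in>{1..K}. Fs i \<in> L_space"
    and "0 < \<alpha>" and "\<alpha> < 1"
    and "0 < b\<^sub>\<alpha>"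
    and "\<forall>F\<in>mixtures K Fs. \<forall>G\<in>mixtures K Fs. normL (\<lambda>x. F x - G x) \<le> M\<^sub>\<alpha>"
    and "\<forall>F\<in>mixtures K Fs. \<forall>y\<in>{-M\<^sub>\<alpha>..M\<^sub>\<alpha>}.
           \<bar>F (VaR \<alpha> F + b\<^sub>\<alpha> * y) - \<alpha>\<bar> \<ge> \<bar>y\<bar>"
    and "0 < M0" and "M0 < M\<^sub>\<alpha>"
  shows "smooth_EDPM K Fs (CVaR \<alpha>)
           ((1 + (SUP F\<in>mixtures K Fs. \<bar>VaR \<alpha> F\<bar>)) / \<alpha>) (2 * b\<^sub>\<alpha> / \<alpha>) M0"
proof -
  note K1 = assms(1) and dF = assms(2) and LF = assms(3) and a0 = assms(4) and a1 = assms(5)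
    and b0 = assms(6) and M7 = assms(7) and H8 = assms(8) and M00 = assms(9) and M0a = assms(10)
  have fF: "\<forall>i\<in>{1..K}. fm (Fs i)"
  proof
    fix i assume i: "i \<in> {1..K}"
    show "fm (Fs i)" by (rule Lspace_dist_fm) (use dF LF i in blast)+
  qed
  let ?mix = "mixtures K Fs"
  let ?vs = "SUP F\<in>?mix. \<bar>VaR \<alpha> F\<bar>"
  let ?Y = "\<Sum>i=1..K. \<bar>VaR \<alpha> (Fs i)\<bar>"
  have mixd: "is_dist_fn F" "fm F" if "F \<in> ?mix" for F
    using mixture_facts[OF that dF fF] by blast+
  have vb: "\<bar>VaR \<alpha> F\<bar> \<le> ?Y" if "F \<in> ?mix" for F
    by (rule mixture_VaR_bound[OF that dF fF a0 a1])
  have bdd: "bdd_above ((\<lambda>F. \<bar>VaR \<alpha> F\<bar>) ` ?mix)" by (rule bdd_aboveI2) (rule vb)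
  have vs: "\<bar>VaR \<alpha> F\<bar> \<le> ?vs" if "F \<in> ?mix" for F by (rule cSUP_upper[OF that bdd])
  define p0 :: "nat \<Rightarrow> real" where "p0 = (\<lambda>i. if i = 1 then 1 else 0)"
  have "p0 \<in> prob_simplex K" unfolding prob_simplex_def p0_def using K1 by simp
  then have "(\<lambda>y. \<Sum>i=1..K. p0 i * Fs i y) \<in> ?mix" unfolding mixtures_def by blast
  then have vs0: "0 \<le> ?vs" using vs by fastforce
  show ?thesis
    unfolding smooth_EDPM_def
  proof (intro conjI exI[of _ "AF \<alpha>"] ballI)
    show "0 \<le> (1 + ?vs) / \<alpha>" using vs0 a0 by simp
    show "0 \<le> 2 * b\<^sub>\<alpha> / \<alpha>" using b0 a0 by simp
    show "0 < M0" by (rule M00)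
    fix F assume "F \<in> L_space" then show "bounded_linear_L (AF \<alpha> F)" using AF_linear[OF a0] by blast
  next
    fix F G assume F: "F \<in> ?mix" and G: "G \<in> ?mix \<union> empirical"
    have dG: "is_dist_fn G" "fm G" using G mixd empirical_facts by blast+
    note dFF = mixd[OF F]
    let ?H = "\<lambda>x. G x - F x"
    note DL = diff_Lspace[OF dG dFF]
    obtain B where B: "\<And>x. \<bar>?H x\<bar> \<le> B" using dist_diff_bound[OF dG(1) dFF(1)] by blast
    have hs: "\<bar>?H y\<bar> \<le> sup_norm ?H" for y by (rule sup_norm_ge) (use B in blast)
    have K: "\<bar>?H y - Lim at_bot ?H\<bar> \<le> sup_norm ?H" for y using hs[of y] DL(2) by simp
    have S0: "0 \<le> sup_norm ?H" using hs[of 0] by linarith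
    have Sn: "sup_norm ?H \<le> normL ?H" by (rule normL_ge_sup)
    have "\<bar>AF \<alpha> F ?H\<bar> \<le> (1/\<alpha>) * (normL ?H + \<bar>VaR \<alpha> F\<bar> * sup_norm ?H)"
      by (rule AF_bound[OF a0 DL(1) K])
    also have "\<dots> \<le> (1/\<alpha>) * (normL ?H + ?vs * normL ?H)"
    proof -
      have "\<bar>VaR \<alpha> F\<bar> * sup_norm ?H \<le> ?vs * normL ?H"
        by (rule mult_mono[OF vs[OF F] Sn vs0 S0])
      then show ?thesis using a0 by (simp add: divide_right_mono)
    qed
    also have "\<dots> = (1 + ?vs) / \<alpha> * normL ?H" by (simp add: algebra_simps add_divide_distrib)
    finally show "\<bar>AF \<alpha> F ?H\<bar> \<le> (1 + ?vs) / \<alpha> * normL ?H" .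
  next
    fix F G assume F: "F \<in> ?mix" and G: "G \<in> ?mix \<union> {f \<in> empirical. normL (\<lambda>x. F x - f x) \<le> M0}"
    have dG: "is_dist_fn G" "fm G" using G mixd empirical_facts by blast+
    note dFF = mixd[OF F]
    let ?H = "\<lambda>x. G x - F x"
    let ?vF = "VaR \<alpha> F" and ?vG = "VaR \<alpha> G"
    define \<delta> where "\<delta> = sup_norm (\<lambda>x. F x - G x)"
    have dM: "\<delta> \<le> M\<^sub>\<alpha>"
    proof -
      have "normL (\<lambda>x. F x - G x) \<le> M\<^sub>\<alpha>"
        using G M7 F M0a by fastforce
      then show ?thesis unfolding \<delta>_def using normL_ge_sup[of "\<lambda>x. F x - G x"] by linarith
    qed
    obtain B where B: "\<And>x. \<bar>F x - G x\<bar> \<le> B" using dist_diff_bound[OF dFF(1) dG(1)] by blast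
    have cl0: "\<bar>F y - G y\<bar> \<le> \<delta>" for y unfolding \<delta>_def by (rule sup_norm_ge) (use B in blast)
    have cl: "\<bar>G y - F y\<bar> \<le> \<delta>" for y using cl0[of y] by (simp add: abs_minus_commute)
    have d0: "0 \<le> \<delta>" using cl0[of 0] by linarith
    have dn: "\<delta> \<le> normL ?H" using normL_ge_sup[of ?H] sup_norm_sym[of F G] unfolding \<delta>_def by linarith
    note VF = VaR_props[OF dFF(1) a0 a1] and VG = VaR_props[OF dG(1) a0 a1]
    have Fup: "\<alpha> + \<delta> \<le> F (?vF + b\<^sub>\<alpha> * \<delta>)"
    proof -
      have "\<delta> \<in> {-M\<^sub>\<alpha>..M\<^sub>\<alpha>}" using d0 dM by simp
      then have "\<bar>\<delta>\<bar> \<le> \<bar>F (?vF + b\<^sub>\<alpha> * \<delta>) - \<alpha>\<bar>" using H8 F by blast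
      moreover have "\<alpha> \<le> F (?vF + b\<^sub>\<alpha> * \<delta>)" by (rule VF(2)) (use b0 d0 in simp)
      ultimately show ?thesis using d0 by linarith
    qed
    have Fdn: "F (?vF - b\<^sub>\<alpha> * \<delta>) \<le> \<alpha> - \<delta>" if dp: "0 < \<delta>"
    proof -
      have "- \<delta> \<in> {-M\<^sub>\<alpha>..M\<^sub>\<alpha>}" using d0 dM by simp
      then have "\<bar>- \<delta>\<bar> \<le> \<bar>F (?vF + b\<^sub>\<alpha> * (- \<delta>)) - \<alpha>\<bar>" using H8 F by blast
      moreover have "F (?vF - b\<^sub>\<alpha> * \<delta>) < \<alpha>" by (rule VF(1)) (use b0 dp in simp)
      ultimately show ?thesis using d0 by simp
    qed
    have GB: "\<bar>G y\<bar> \<le> 1" for y using dist_basic(5,6)[OF dG(1), of y] by simp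
    have Gi: "set_integrable lborel {..c} G" for c by (rule fm_left_int[OF dG])
    have Fi: "set_integrable lborel {..c} F" for c by (rule fm_left_int[OF dFF])
    have R: "\<bar>?vG - ?vF - (1/\<alpha>) * ((LINT y:{..?vG}|lborel. G y) - (LINT y:{..?vF}|lborel. G y))\<bar>
        \<le> b\<^sub>\<alpha> / \<alpha> * \<delta>\<^sup>2"
      by (rule remainder[OF a0 b0 d0 dist_basic(1)[OF dG(1)] GB VG(2) VG(1) VF(2) VF(1) cl Fup Fdn Gi])
    have AFe: "AF \<alpha> F ?H = - (1/\<alpha>) * ((LINT y:{..?vF}|lborel. G y) - (LINT y:{..?vF}|lborel. F y))"
      unfolding AF_def diff_Lspace(2)[OF dG dFF] using set_integral_diff(2)[OF Gi Fi] by simp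
    have e: "CVaR \<alpha> G - CVaR \<alpha> F - AF \<alpha> F ?H
        = ?vG - ?vF - (1/\<alpha>) * ((LINT y:{..?vG}|lborel. G y) - (LINT y:{..?vF}|lborel. G y))"
      unfolding AFe CVaR_def by (simp add: algebra_simps)
    have "b\<^sub>\<alpha> / \<alpha> * \<delta>\<^sup>2 \<le> b\<^sub>\<alpha> / \<alpha> * (normL ?H)\<^sup>2"
      by (rule mult_left_mono[OF power_mono[OF dn d0]]) (use a0 b0 in simp)
    also have "\<dots> = 1/2 * (2 * b\<^sub>\<alpha> / \<alpha>) * (normL ?H)\<^sup>2" by simp
    finally show "\<bar>CVaR \<alpha> G - CVaR \<alpha> F - AF \<alpha> F ?H\<bar> \<le> 1/2 * (2 * b\<^sub>\<alpha> / \<alpha>) * (normL ?H)\<^sup>2"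
      using R unfolding e by linarith
  qed
qed

end
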